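(* Assume $a(\eta_b)d(\eta_b/q)\neq0$ for all $b\in\{1,\dots,\mathsf N\}$. Define $\det\bar{\mathsf M}(\eta_b):=\mathsf B(\eta_b)\mathsf C(\eta_b/q)-\mathsf A(\eta_b)\mathsf D(\eta_b/q)$. Then for each $b$, $\bar{\mathsf T}(\eta_b)\bar{\mathsf T}(\eta_b/q)=\det\bar{\mathsf M}(\eta_b)=a(\eta_b)d(\eta_b/q)\,\mathbb I$, and for every $n\in\{1,\dots,\mathsf N\}$ and every $2\times2$ matrix $X$, $X_n=\prod_{b=1}^{n-1}\bar{\mathsf T}(\eta_b)\;\mathrm{tr}_0\big(\mathsf M_0(\eta_n)X_0\sigma^x_0\big)\prod_{b=1}^{n}\frac{\bar{\mathsf T}(\eta_b/q)}{\det\bar{\mathsf M}(\eta_b)}$ $\phantom{X_n}=\prod_{b=1}^{n}\bar{\mathsf T}(\eta_b)\;\frac{\mathrm{tr}_0\big(\sigma^z_0\mathsf M_0^{t_0}(\eta_n/q)\sigma^z_0X_0\sigma^x_0\big)}{\det\mathsf M(\eta_n)}\prod_{b=1}^{n-1}\frac{\bar{\mathsf T}(\eta_b/q)}{\det\bar{\mathsf M}(\eta_b)}$, where $\det\mathsf M(\eta_n)=-a(\eta_n)d(\eta_n/q)$.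
   Context: Fix $q=e^{\eta}\in\mathbb C$, $q\neq\pm1$, $\mathsf N\ge1$, inhomogeneities $\eta_1,\dots,\eta_{\mathsf N}\in\mathbb C\setminus\{0\}$. $\mathcal R_{\mathsf N}=\bigotimes_{n=1}^{\mathsf N}\mathbb C^2$; $\sigma^x,\sigma^z$ Pauli matrices, $\sigma^+=E_{12}$, $\sigma^-=E_{21}$; $X_n$ denotes $X$ acting on the $n$-th tensor factor, $X_0$ denotes $X$ acting on an auxiliary space $0\cong\mathbb C^2$; $\mathrm{tr}_0$ is the partial trace and $t_0$ the partial transpose over space $0$. Lax operator $\mathsf L_{0n}(\lambda)=\begin{pmatrix}x_+(\lambda)+x_-(\lambda)\sigma^z_n & (q-q^{-1})\sigma^-_n\\ (q-q^{-1})\sigma^+_n & x_+(\lambda)-x_-(\lambda)\sigma^z_n\end{pmatrix}$, $x_\pm(\lambda)=\tfrac12(\lambda q-(q\lambda)^{-1}\pm(\lambda-\lambda^{-1}))$; monodromy $\mathsf M_0(\lambda)=\mathsf L_{0\mathsf N}(\lambda/\eta_{\mathsf N})\cdots\mathsf L_{01}(\lambda/\eta_1)=\begin{pmatrix}\mathsf A&\mathsf B\\ \mathsf C&\mathsf D\end{pmatrix}(\lambda)$; quantum determinant $\det\mathsf M(\lambda)=\mathsf A(\lambda)\mathsf D(\lambda/q)-\mathsf B(\lambda)\mathsf C(\lambda/q)$; antiperiodic transfer matrix $\bar{\mathsf T}(\lambda)=\mathsf B(\lambda)+\mathsf C(\lambda)$ (commuting family). $a(\lambda)=-\prod_n(\lambda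 q/\eta_n-\eta_n/(\lambda q))$, $d(\lambda)=\prod_n(\lambda/\eta_n-\eta_n/\lambda)$. *)

theory Defs
  imports Complex_Main
begin

text \<open>Quantum space R_N = (C^2)^{tensor N}: operators are matrices indexed by basis
 states, i.e. 0/1-lists of length N (entry m of the list is the state of site m+1,
 0 = first basis vector, 1 = second).  All operators built below vanish outside
 the basis states, so operator equality is plain function equality.\<close>

type_synonym cop = "nat list \<Rightarrow> nat list \<Rightarrow> complex"
type_synonym aop = "nat \<Rightarrow> nat \<Rightarrow> cop"  \<comment> \<open>2x2 matrix (aux space 0) of operators\<close>

definition states :: "nat \<Rightarrow> nat list set" where
  "states N = {xs. length xs = N \<and> set xs \<subseteq> {0, 1}}"

definition op_id :: "nat \<Rightarrow> cop" where
  "op_id N = (\<lambda>i j. if i \<in> states N \<and> i = j then 1 else 0)"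

definition op_mult :: "nat \<Rightarrow> cop \<Rightarrow> cop \<Rightarrow> cop" where
  "op_mult N A B = (\<lambda>i j. \<Sum>k\<in>states N. A i k * B k j)"

definition op_add :: "cop \<Rightarrow> cop \<Rightarrow> cop" where
  "op_add A B = (\<lambda>i j. A i j + B i j)"

definition op_smult :: "complex \<Rightarrow> cop \<Rightarrow> cop" where
  "op_smult c A = (\<lambda>i j. c * A i j)"

definition op_diff :: "cop \<Rightarrow> cop \<Rightarrow> cop" where
  "op_diff A B = (\<lambda>i j. A i j - B i j)"

definition op_prod :: "nat \<Rightarrow> cop list \<Rightarrow> cop" where
  "op_prod N As = foldr (op_mult N) As (op_id N)"

text \<open>X_n: the 2x2 matrix X acting on the n-th tensor factor (1 <= n <= N).\<close>
definition loc :: "nat \<Rightarrow> nat \<Rightarrow> (nat \<Rightarrow> nat \<Rightarrow> complex) \<Rightarrow> cop" where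
  "loc N n X = (\<lambda>i j. if i \<in> states N \<and> j \<in> states N \<and> (\<forall>m<N. m \<noteq> n - 1 \<longrightarrow> i ! m = j ! m)
                       then X (i ! (n - 1)) (j ! (n - 1)) else 0)"

definition id2 :: "nat \<Rightarrow> nat \<Rightarrow> complex" where
  "id2 a b = (if a = b \<and> a < 2 then 1 else 0)"
definition sigz :: "nat \<Rightarrow> nat \<Rightarrow> complex" where
  "sigz a b = (if a = 0 \<and> b = 0 then 1 else if a = 1 \<and> b = 1 then -1 else 0)"
definition sigx :: "nat \<Rightarrow> nat \<Rightarrow> complex" where
  "sigx a b = (if (a = 0 \<and> b = 1) \<or> (a = 1 \<and> b = 0) then 1 else 0)"
definition sigp :: "nat \<Rightarrow> nat \<Rightarrow> complex" where
  "sigp a b = (if a = 0 \<and> b = 1 then 1 else 0)"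
definition sigm :: "nat \<Rightarrow> nat \<Rightarrow> complex" where
  "sigm a b = (if a = 1 \<and> b = 0 then 1 else 0)"

definition aux_mult :: "nat \<Rightarrow> aop \<Rightarrow> aop \<Rightarrow> aop" where
  "aux_mult N M P = (\<lambda>a c. op_add (op_mult N (M a 0) (P 0 c)) (op_mult N (M a 1) (P 1 c)))"

text \<open>X_0: a scalar 2x2 matrix on space 0 (tensor identity on R_N).\<close>
definition aux_scalar :: "nat \<Rightarrow> (nat \<Rightarrow> nat \<Rightarrow> complex) \<Rightarrow> aop" where
  "aux_scalar N X = (\<lambda>a b. op_smult (X a b) (op_id N))"

definition ptrace :: "aop \<Rightarrow> cop" where
  "ptrace M = op_add (M 0 0) (M 1 1)"

definition ptransp :: "aop \<Rightarrow> aop" where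
  "ptransp M = (\<lambda>a b. M b a)"

definition xp :: "complex \<Rightarrow> complex \<Rightarrow> complex" where
  "xp q l = (l * q - inverse (q * l) + (l - inverse l)) / 2"
definition xm :: "complex \<Rightarrow> complex \<Rightarrow> complex" where
  "xm q l = (l * q - inverse (q * l) - (l - inverse l)) / 2"

definition lax :: "nat \<Rightarrow> complex \<Rightarrow> nat \<Rightarrow> complex \<Rightarrow> aop" where
  "lax N q n l = (\<lambda>a b.
     if a = 0 \<and> b = 0 then op_add (op_smult (xp q l) (op_id N)) (op_smult (xm q l) (loc N n sigz))
     else if a = 0 \<and> b = 1 then op_smult (q - inverse q) (loc N n sigm)
     else if a = 1 \<and> b = 0 then op_smult (q - inverse q) (loc N n sigp)
     else if a = 1 \<and> b = 1 then op_diff (op_smult (xp q l) (op_id N)) (op_smult (xm q l) (loc N n sigz))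
     else (\<lambda>_ _. 0))"

primrec mono :: "nat \<Rightarrow> complex \<Rightarrow> (nat \<Rightarrow> complex) \<Rightarrow> nat \<Rightarrow> complex \<Rightarrow> aop" where
  "mono N q eta 0 l = aux_scalar N id2"
| "mono N q eta (Suc k) l = aux_mult N (lax N q (Suc k) (l / eta (Suc k))) (mono N q eta k l)"

definition monodromy :: "nat \<Rightarrow> complex \<Rightarrow> (nat \<Rightarrow> complex) \<Rightarrow> complex \<Rightarrow> aop" where
  "monodromy N q eta l = mono N q eta N l"

definition opA where "opA N q eta l = monodromy N q eta l 0 0"
definition opB where "opB N q eta l = monodromy N q eta l 0 1"
definition opC where "opC N q eta l = monodromy N q eta l 1 0"
definition opD where "opD N q eta l = monodromy N q eta l 1 1"

definition Tbar :: "nat \<Rightarrow> complex \<Rightarrow> (nat \<Rightarrow> complex) \<Rightarrow> complex \<Rightarrow> cop" where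
  "Tbar N q eta l = op_add (opB N q eta l) (opC N q eta l)"

definition qdet :: "nat \<Rightarrow> complex \<Rightarrow> (nat \<Rightarrow> complex) \<Rightarrow> complex \<Rightarrow> cop" where
  "qdet N q eta l = op_diff (op_mult N (opA N q eta l) (opD N q eta (l / q)))
                             (op_mult N (opB N q eta l) (opC N q eta (l / q)))"

definition qdetbar :: "nat \<Rightarrow> complex \<Rightarrow> (nat \<Rightarrow> complex) \<Rightarrow> complex \<Rightarrow> cop" where
  "qdetbar N q eta l = op_diff (op_mult N (opB N q eta l) (opC N q eta (l / q)))
                                (op_mult N (opA N q eta l) (opD N q eta (l / q)))"

definition afun :: "nat \<Rightarrow> complex \<Rightarrow> (nat \<Rightarrow> complex) \<Rightarrow> complex \<Rightarrow> complex" where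
  "afun N q eta l = - (\<Prod>n=1..N. l * q / eta n - eta n / (l * q))"

definition dfun :: "nat \<Rightarrow> (nat \<Rightarrow> complex) \<Rightarrow> complex \<Rightarrow> complex" where
  "dfun N eta l = (\<Prod>n=1..N. l / eta n - eta n / l)"

end

theory Submission
  imports Defs "HOL-Library.Function_Algebras"
begin


section \<open>Basic operator algebra\<close>

lemma op_add_eq: "op_add A B = A + B" by (simp add: op_add_def fun_eq_iff)
lemma op_diff_eq: "op_diff A B = A - B" by (simp add: op_diff_def fun_eq_iff)

lemma finite_states[simp]: "finite (states N)"
proof -
  have "states N = {xs. set xs \<subseteq> {0,1} \<and> length xs = N}" by (auto simp: states_def)
  then show ?thesis using finite_lists_length_eq[of "{0::nat,1}" N] by simp
qed

definition wf :: "nat \<Rightarrow> cop \<Rightarrow> bool" where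
  "wf N A \<longleftrightarrow> (\<forall>i j. (i \<notin> states N \<or> j \<notin> states N) \<longrightarrow> A i j = 0)"

lemma op_mult_assoc: "op_mult N (op_mult N A B) C = op_mult N A (op_mult N B C)"
  unfolding op_mult_def
  by (auto simp: fun_eq_iff sum_distrib_left sum_distrib_right mult.assoc intro: sum.swap)

lemma op_mult_add_left: "op_mult N (A + B) C = op_mult N A C + op_mult N B C"
  by (simp add: op_mult_def fun_eq_iff distrib_right sum.distrib)
lemma op_mult_add_right: "op_mult N C (A + B) = op_mult N C A + op_mult N C B"
  by (simp add: op_mult_def fun_eq_iff distrib_left sum.distrib)
lemma op_mult_diff_left: "op_mult N (A - B) C = op_mult N A C - op_mult N B C"
  by (simp add: op_mult_def fun_eq_iff left_diff_distrib sum_subtractf)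
lemma op_mult_diff_right: "op_mult N C (A - B) = op_mult N C A - op_mult N C B"
  by (simp add: op_mult_def fun_eq_iff right_diff_distrib sum_subtractf)
lemma op_mult_uminus_left: "op_mult N (- A) C = - op_mult N A C"
  by (simp add: op_mult_def fun_eq_iff sum_negf)
lemma op_mult_uminus_right: "op_mult N C (- A) = - op_mult N C A"
  by (simp add: op_mult_def fun_eq_iff sum_negf)
lemma op_mult_zero_left[simp]: "op_mult N 0 C = 0"
  by (simp add: op_mult_def fun_eq_iff)
lemma op_mult_zero_right[simp]: "op_mult N C 0 = 0"
  by (simp add: op_mult_def fun_eq_iff)
lemma op_mult_smult_left: "op_mult N (op_smult c A) B = op_smult c (op_mult N A B)"
  by (simp add: op_mult_def op_smult_def fun_eq_iff sum_distrib_left mult.assoc)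
lemma op_mult_smult_right: "op_mult N A (op_smult c B) = op_smult c (op_mult N A B)"
  by (simp add: op_mult_def op_smult_def fun_eq_iff sum_distrib_left mult.assoc mult.left_commute)
lemma sum_cop_apply: "(\<Sum>x\<in>S. (f x :: cop)) i j = (\<Sum>x\<in>S. f x i j)"
  by (induction S rule: infinite_finite_induct) auto
lemma op_mult_sum_left: "op_mult N (\<Sum>x\<in>S. f x) C = (\<Sum>x\<in>S. op_mult N (f x) C)"
  by (auto simp: fun_eq_iff op_mult_def sum_cop_apply sum_distrib_right intro: sum.swap)
lemma op_mult_sum_right: "op_mult N C (\<Sum>x\<in>S. f x) = (\<Sum>x\<in>S. op_mult N C (f x))"
  by (auto simp: fun_eq_iff op_mult_def sum_cop_apply sum_distrib_left intro: sum.swap)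

lemma op_smult_add: "op_smult c (A + B) = op_smult c A + op_smult c B"
  by (simp add: op_smult_def fun_eq_iff distrib_left)
lemma op_smult_diff: "op_smult c (A - B) = op_smult c A - op_smult c B"
  by (simp add: op_smult_def fun_eq_iff right_diff_distrib)
lemma op_smult_uminus: "op_smult c (- A) = - op_smult c A"
  by (simp add: op_smult_def fun_eq_iff)
lemma op_smult_smult: "op_smult c (op_smult d A) = op_smult (c * d) A"
  by (simp add: op_smult_def fun_eq_iff)
lemma op_smult_zero[simp]: "op_smult c 0 = 0" "op_smult 0 A = 0"
  by (simp_all add: op_smult_def fun_eq_iff)
lemma op_smult_one[simp]: "op_smult 1 A = A"
  by (simp add: op_smult_def fun_eq_iff)
lemma op_smult_sum: "op_smult c (\<Sum>x\<in>S. f x) = (\<Sum>x\<in>S. op_smult c (f x))"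
  by (auto simp: fun_eq_iff op_smult_def sum_cop_apply sum_distrib_left)
lemma op_smult_add_scalar: "op_smult (c + d) A = op_smult c A + op_smult d A"
  by (simp add: op_smult_def fun_eq_iff distrib_right)
lemma op_smult_minus_scalar: "op_smult (- c) A = - op_smult c A"
  by (simp add: op_smult_def fun_eq_iff)
lemma op_smult_diff_scalar: "op_smult (c - d) A = op_smult c A - op_smult d A"
  by (simp add: op_smult_def fun_eq_iff left_diff_distrib)

lemma op_id_left: "wf N A \<Longrightarrow> op_mult N (op_id N) A = A"
proof -
  assume w: "wf N A"
  have "(\<Sum>k\<in>states N. op_id N i k * A k j) = A i j" for i j
  proof (cases "i \<in> states N")
    case True
    then have "(\<Sum>k\<in>states N. op_id N i k * A k j) = (\<Sum>k\<in>{i}. op_id N i k * A k j)"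
      by (intro sum.mono_neutral_right) (auto simp: op_id_def)
    then show ?thesis using True by (simp add: op_id_def)
  next
    case False then show ?thesis using w by (simp add: op_id_def wf_def)
  qed
  then show ?thesis by (simp add: op_mult_def fun_eq_iff)
qed
lemma op_id_right: "wf N A \<Longrightarrow> op_mult N A (op_id N) = A"
proof -
  assume w: "wf N A"
  have "(\<Sum>k\<in>states N. A i k * op_id N k j) = A i j" for i j
  proof (cases "j \<in> states N")
    case True
    then have "(\<Sum>k\<in>states N. A i k * op_id N k j) = (\<Sum>k\<in>{j}. A i k * op_id N k j)"
      by (intro sum.mono_neutral_right) (auto simp: op_id_def)
    then show ?thesis using True by (simp add: op_id_def)
  next
    case False then show ?thesis using w by (auto simp: op_id_def wf_def intro!: sum.neutral)
  qed
  then show ?thesis by (simp add: op_mult_def fun_eq_iff)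
qed

lemma wf_id[simp]: "wf N (op_id N)" by (simp add: wf_def op_id_def)
lemma wf_zero[simp]: "wf N 0" by (simp add: wf_def)
lemma wf_add[simp]: "wf N A \<Longrightarrow> wf N B \<Longrightarrow> wf N (A + B)" by (simp add: wf_def)
lemma wf_diff[simp]: "wf N A \<Longrightarrow> wf N B \<Longrightarrow> wf N (A - B)" by (simp add: wf_def)
lemma wf_uminus[simp]: "wf N A \<Longrightarrow> wf N (- A)" by (simp add: wf_def)
lemma wf_smult[simp]: "wf N A \<Longrightarrow> wf N (op_smult c A)" by (simp add: wf_def op_smult_def)
lemma wf_mult[simp]: "wf N A \<Longrightarrow> wf N B \<Longrightarrow> wf N (op_mult N A B)"
  by (auto simp: wf_def op_mult_def)
lemma wf_sum[simp]: "(\<And>x. x \<in> S \<Longrightarrow> wf N (f x)) \<Longrightarrow> wf N (\<Sum>x\<in>S. f x)"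
  by (auto simp: wf_def sum_cop_apply)

lemma op_mult_id_smult: "wf N A \<Longrightarrow> op_mult N (op_smult c (op_id N)) A = op_smult c A"
  by (simp add: op_mult_smult_left op_id_left)
lemma op_mult_smult_id: "wf N A \<Longrightarrow> op_mult N A (op_smult c (op_id N)) = op_smult c A"
  by (simp add: op_mult_smult_right op_id_right)


section \<open>Local operators\<close>

definition m2 :: "(nat \<Rightarrow> nat \<Rightarrow> complex) \<Rightarrow> (nat \<Rightarrow> nat \<Rightarrow> complex) \<Rightarrow> (nat \<Rightarrow> nat \<Rightarrow> complex)" where
  "m2 X Y = (\<lambda>a b. X a 0 * Y 0 b + X a 1 * Y 1 b)"

definition Em :: "nat \<Rightarrow> nat \<Rightarrow> nat \<Rightarrow> nat \<Rightarrow> complex" where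
  "Em i j = (\<lambda>a b. if a = i \<and> b = j then 1 else 0)"

lemma states_nth: "i \<in> states N \<Longrightarrow> m < N \<Longrightarrow> i ! m = 0 \<or> i ! m = 1"
  unfolding states_def by (auto dest!: nth_mem)

lemma states_len: "i \<in> states N \<Longrightarrow> length i = N"
  unfolding states_def by auto

lemma upd_states: "i \<in> states N \<Longrightarrow> t < 2 \<Longrightarrow> i[p := t] \<in> states N"
  unfolding states_def using set_update_subset_insert[of i p t] by (auto simp: less_2_cases_iff)

lemma sum_states_single:
  assumes i: "i \<in> states N" and p: "p < N"
    and z: "\<And>k. k \<in> states N \<Longrightarrow> \<not> (\<forall>m<N. m \<noteq> p \<longrightarrow> k ! m = i ! m) \<Longrightarrow> f k = 0"
  shows "(\<Sum>k\<in>states N. f k) = f (i[p := 0]) + f (i[p := 1])"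
proof -
  have s0: "i[p:=0] \<in> states N" and s1: "i[p:=1] \<in> states N" using upd_states[OF i] by auto
  have ne: "i[p:=0] \<noteq> i[p:=1]"
  proof
    assume "i[p:=0] = i[p:=1]"
    then have "i[p:=0] ! p = i[p:=1] ! p" by simp
    then show False using p states_len[OF i] by simp
  qed
  have "(\<Sum>k\<in>states N. f k) = (\<Sum>k\<in>{i[p:=0], i[p:=1]}. f k)"
  proof (rule sum.mono_neutral_right)
    show "\<forall>k\<in>states N - {i[p := 0], i[p := 1]}. f k = 0"
    proof
      fix k assume k: "k \<in> states N - {i[p := 0], i[p := 1]}"
      show "f k = 0"
      proof (rule z)
        show "k \<in> states N" using k by simp
        show "\<not> (\<forall>m<N. m \<noteq> p \<longrightarrow> k ! m = i ! m)"
        proof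
          assume ag: "\<forall>m<N. m \<noteq> p \<longrightarrow> k ! m = i ! m"
          have "k = i[p := k ! p]"
            using ag states_len[OF i] states_len[of k N] k p
            by (intro nth_equalityI) (auto simp: nth_list_update)
          moreover have "k ! p = 0 \<or> k ! p = 1" using states_nth[of k N p] k p by simp
          ultimately show False using k by auto
        qed
      qed
    qed
  qed (use s0 s1 in auto)
  also have "\<dots> = f (i[p := 0]) + f (i[p := 1])" using ne by simp
  finally show ?thesis .
qed

lemma wf_loc[simp]: "wf N (loc N n X)"
  by (simp add: wf_def loc_def)

definition agree :: "nat \<Rightarrow> nat set \<Rightarrow> nat list \<Rightarrow> nat list \<Rightarrow> bool" where
  "agree N P i j \<longleftrightarrow> (\<forall>m<N. m \<notin> P \<longrightarrow> i ! m = j ! m)"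

lemma loc_alt: "loc N n X i j = (if i \<in> states N \<and> j \<in> states N \<and> agree N {n-1} i j
     then X (i ! (n - 1)) (j ! (n - 1)) else 0)"
  by (simp add: loc_def agree_def)

lemma loc_mult_same:
  assumes n: "1 \<le> n" "n \<le> N"
  shows "op_mult N (loc N n X) (loc N n Y) = loc N n (m2 X Y)"
proof (intro ext)
  fix i j
  let ?p = "n - 1"
  have p: "?p < N" using n by auto
  show "op_mult N (loc N n X) (loc N n Y) i j = loc N n (m2 X Y) i j"
  proof (cases "i \<in> states N")
    case False then show ?thesis by (simp add: op_mult_def loc_def)
  next
    case i: True
    have "op_mult N (loc N n X) (loc N n Y) i j = (\<Sum>k\<in>states N. loc N n X i k * loc N n Y k j)"
      by (simp add: op_mult_def)
    also have "\<dots> = loc N n X i (i[?p:=0]) * loc N n Y (i[?p:=0]) j + loc N n X i (i[?p:=1]) * loc N n Y (i[?p:=1]) j"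
      by (rule sum_states_single[OF i p]) (auto simp: loc_def)
    also have "\<dots> = loc N n (m2 X Y) i j"
      using i p upd_states[OF i, of 0 ?p] upd_states[OF i, of 1 ?p] states_len[OF i]
      by (auto simp: loc_def m2_def nth_list_update)
    finally show ?thesis .
  qed
qed

lemma loc_mult_diff_closed:
  assumes n: "1 \<le> n" "n \<le> N" and m: "1 \<le> m" "m \<le> N" and mn: "m \<noteq> n"
  shows "op_mult N (loc N m X) (loc N n Y) = (\<lambda>i j. if i \<in> states N \<and> j \<in> states N \<and> agree N {m-1, n-1} i j
     then X (i ! (m-1)) (j ! (m-1)) * Y (i ! (n-1)) (j ! (n-1)) else 0)"
proof (intro ext)
  fix i j
  let ?p = "m - 1" and ?r = "n - 1"
  have p: "?p < N" and r: "?r < N" and pr: "?p \<noteq> ?r" using n m mn by auto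
  show "op_mult N (loc N m X) (loc N n Y) i j = (if i \<in> states N \<and> j \<in> states N \<and> agree N {?p, ?r} i j
     then X (i ! ?p) (j ! ?p) * Y (i ! ?r) (j ! ?r) else 0)"
  proof (cases "i \<in> states N")
    case False then show ?thesis by (simp add: op_mult_def loc_def)
  next
    case i: True
    have li: "length i = N" using states_len[OF i] .
    have "op_mult N (loc N m X) (loc N n Y) i j = (\<Sum>k\<in>states N. loc N m X i k * loc N n Y k j)"
      by (simp add: op_mult_def)
    also have "\<dots> = loc N m X i (i[?p:=0]) * loc N n Y (i[?p:=0]) j + loc N m X i (i[?p:=1]) * loc N n Y (i[?p:=1]) j"
      by (rule sum_states_single[OF i p]) (auto simp: loc_def)
    also have "\<dots> = (if i \<in> states N \<and> j \<in> states N \<and> agree N {?p, ?r} i j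
     then X (i ! ?p) (j ! ?p) * Y (i ! ?r) (j ! ?r) else 0)"
    proof (cases "j \<in> states N \<and> agree N {?p, ?r} i j")
      case True
      then have j: "j \<in> states N" and ag: "agree N {?p, ?r} i j" by auto
      have jp: "j ! ?p = 0 \<or> j ! ?p = 1" using states_nth[OF j p] .
      have ag0: "\<forall>ma<N. ma \<noteq> ?r \<longrightarrow> i[?p := j ! ?p] ! ma = j ! ma"
        using ag li p by (auto simp: agree_def nth_list_update)
      have agx: "\<forall>ma<N. ma \<noteq> ?p \<longrightarrow> i ! ma = i[?p := t] ! ma" for t
        using li by (auto simp: nth_list_update)
      have bad: "t \<noteq> j ! ?p \<Longrightarrow> \<not> (\<forall>ma<N. ma \<noteq> ?r \<longrightarrow> i[?p := t] ! ma = j ! ma)" for t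
        using p pr li by (auto simp: nth_list_update)
      show ?thesis
        using jp i j ag0 agx bad p r pr li upd_states[OF i, of 0 ?p] upd_states[OF i, of 1 ?p]
        by (auto simp: loc_def nth_list_update agree_def)
    next
      case False
      have "loc N n Y (i[?p:=t]) j = 0" for t
      proof (cases "j \<in> states N")
        case True
        with False have "\<not> agree N {?p, ?r} i j" by simp
        then obtain ma where "ma < N" "ma \<noteq> ?p" "ma \<noteq> ?r" "i ! ma \<noteq> j ! ma" by (auto simp: agree_def)
        then show ?thesis by (auto simp: loc_def nth_list_update)
      qed (simp add: loc_def)
      then show ?thesis using False by auto
    qed
    finally show ?thesis .
  qed
qed

lemma agree_commute: "agree N {a, b} i j = agree N {b, a} i j"
  by (simp add: insert_commute)

lemma loc_comm:
  assumes "1 \<le> n" "n \<le> N" "1 \<le> m" "m \<le> N" and False: "m \<noteq> n"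
  shows "op_mult N (loc N m X) (loc N n Y) = op_mult N (loc N n Y) (loc N m X)"
proof -
  show ?thesis
    unfolding loc_mult_diff_closed[OF assms(1,2,3,4) False] loc_mult_diff_closed[OF assms(3,4,1,2) False[symmetric]]
    by (auto simp: fun_eq_iff agree_commute)
qed

lemma loc_add: "loc N n (\<lambda>a b. X a b + Y a b) = loc N n X + loc N n Y"
  by (intro ext) (auto simp: loc_def)
lemma loc_diff: "loc N n (\<lambda>a b. X a b - Y a b) = loc N n X - loc N n Y"
  by (intro ext) (auto simp: loc_def)
lemma loc_smult: "loc N n (\<lambda>a b. c * X a b) = op_smult c (loc N n X)"
  by (intro ext) (auto simp: loc_def op_smult_def)
lemma loc_zero: "loc N n (\<lambda>a b. 0) = 0"
  by (intro ext) (simp add: loc_def)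
lemma loc_id:
  assumes "1 \<le> n" "n \<le> N"
  shows "loc N n id2 = op_id N"
proof (intro ext)
  fix i j
  show "loc N n id2 i j = op_id N i j"
  proof (cases "i \<in> states N \<and> j \<in> states N")
    case True
    then have "length i = N" "length j = N" using states_len by auto
    moreover have "n - 1 < N" using assms by linarith
    then have "i ! (n-1) < 2" using True states_nth[of i N "n-1"] by auto
    ultimately show ?thesis using True assms
      by (auto simp: loc_def op_id_def id2_def intro: nth_equalityI)
  qed (auto simp: loc_def op_id_def)
qed

lemma loc_cong: "1 \<le> n \<Longrightarrow> n \<le> N \<Longrightarrow> (\<And>a b. a < 2 \<Longrightarrow> b < 2 \<Longrightarrow> X a b = Y a b) \<Longrightarrow> loc N n X = loc N n Y"
proof (intro ext)
  fix i j assume h: "\<And>a b. a < 2 \<Longrightarrow> b < 2 \<Longrightarrow> X a b = Y a b" and n: "1 \<le> n" "n \<le> N"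
  then have p: "n - 1 < N" by linarith
  show "loc N n X i j = loc N n Y i j"
    using h states_nth[of i N "n-1"] states_nth[of j N "n-1"] p
    by (auto simp: loc_def)
qed


section \<open>Subalgebras generated by sites\<close>

lemma cop_eta_add[simp]: "(\<lambda>a b. (A::cop) a b + B a b) = A + B" by (simp add: fun_eq_iff)
lemma cop_eta_zero[simp]: "(\<lambda>(a::nat list) (b::nat list). (0::complex)) = 0" by (simp add: fun_eq_iff)

inductive_set alg :: "nat \<Rightarrow> nat set \<Rightarrow> cop set" for N S where
  alg_loc: "s \<in> S \<Longrightarrow> 1 \<le> s \<Longrightarrow> s \<le> N \<Longrightarrow> loc N s X \<in> alg N S"
| alg_id: "op_id N \<in> alg N S"
| alg_zero: "0 \<in> alg N S"
| alg_add: "A \<in> alg N S \<Longrightarrow> B \<in> alg N S \<Longrightarrow> A + B \<in> alg N S"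
| alg_mult: "A \<in> alg N S \<Longrightarrow> B \<in> alg N S \<Longrightarrow> op_mult N A B \<in> alg N S"
| alg_smult: "A \<in> alg N S \<Longrightarrow> op_smult c A \<in> alg N S"

lemma alg_wf: "A \<in> alg N S \<Longrightarrow> wf N A"
  by (induction rule: alg.induct) auto

lemma alg_uminus: "A \<in> alg N S \<Longrightarrow> - A \<in> alg N S"
proof -
  assume "A \<in> alg N S"
  then have "op_smult (-1) A \<in> alg N S" by (rule alg_smult)
  moreover have "op_smult (-1) A = - A" by (simp add: op_smult_def fun_eq_iff)
  ultimately show ?thesis by simp
qed

lemma alg_diff: "A \<in> alg N S \<Longrightarrow> B \<in> alg N S \<Longrightarrow> A - B \<in> alg N S"
  using alg_add[of A N S "- B"] alg_uminus[of B N S] by simp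

lemma alg_sum: "(\<And>x. x \<in> I \<Longrightarrow> f x \<in> alg N S) \<Longrightarrow> (\<Sum>x\<in>I. f x) \<in> alg N S"
  by (induction I rule: infinite_finite_induct) (auto intro: alg.intros)

lemma alg_mono: "A \<in> alg N S \<Longrightarrow> S \<subseteq> T \<Longrightarrow> A \<in> alg N T"
  by (induction rule: alg.induct) (auto intro: alg.intros)

lemma alg_comm_loc:
  assumes "A \<in> alg N S" "t \<notin> S" "1 \<le> t" "t \<le> N"
  shows "op_mult N (loc N t Y) A = op_mult N A (loc N t Y)"
  using assms
proof (induction rule: alg.induct)
  case (alg_loc s X)
  then show ?case using loc_comm[of s N t Y X] by auto
next
  case alg_id
  then show ?case by (simp add: op_id_left op_id_right)
next
  case (alg_add A B)
  then show ?case by (simp add: op_mult_add_left op_mult_add_right)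
next
  case (alg_mult A B)
  then show ?case by (metis op_mult_assoc)
next
  case (alg_smult A c)
  then show ?case by (simp add: op_mult_smult_left op_mult_smult_right)
qed simp

lemma alg_comm:
  assumes "B \<in> alg N T" "A \<in> alg N S" "S \<inter> T = {}"
  shows "op_mult N A B = op_mult N B A"
  using assms
proof (induction rule: alg.induct)
  case (alg_loc s X)
  then have "s \<notin> S" by blast
  with alg_loc show ?case using alg_comm_loc[of A N S s X] by simp
next
  case alg_id
  then show ?case using alg_wf by (simp add: op_id_left op_id_right)
next
  case (alg_add A B)
  then show ?case by (simp add: op_mult_add_left op_mult_add_right)
next
  case (alg_mult B1 B2)
  then show ?case by (metis op_mult_assoc)
next
  case (alg_smult A c)
  then show ?case by (simp add: op_mult_smult_left op_mult_smult_right)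
qed simp

lemma loc_alg: "1 \<le> s \<Longrightarrow> s \<le> N \<Longrightarrow> loc N s X \<in> alg N {s}"
  by (rule alg_loc) auto

section \<open>Auxiliary-space matrices\<close>

definition aeq :: "aop \<Rightarrow> aop \<Rightarrow> bool" (infix "\<doteq>" 50) where
  "Z \<doteq> W \<longleftrightarrow> (\<forall>a<2. \<forall>b<2. Z a b = W a b)"

lemma aeq_refl[simp]: "Z \<doteq> Z" by (simp add: aeq_def)
lemma aeq_sym: "Z \<doteq> W \<Longrightarrow> W \<doteq> Z" by (simp add: aeq_def)
lemma aeq_trans[trans]: "Z \<doteq> W \<Longrightarrow> W \<doteq> V \<Longrightarrow> Z \<doteq> V" by (simp add: aeq_def)
lemma eq_aeq_trans[trans]: "Z = W \<Longrightarrow> W \<doteq> V \<Longrightarrow> Z \<doteq> V" by simp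
lemma aeq_eq_trans[trans]: "Z \<doteq> W \<Longrightarrow> W = V \<Longrightarrow> Z \<doteq> V" by simp
lemma aeqD: "Z \<doteq> W \<Longrightarrow> a < 2 \<Longrightarrow> b < 2 \<Longrightarrow> Z a b = W a b" by (simp add: aeq_def)
lemma aeqI: "(\<And>a b. a < 2 \<Longrightarrow> b < 2 \<Longrightarrow> Z a b = W a b) \<Longrightarrow> Z \<doteq> W" by (simp add: aeq_def)

lemma less2: "(a::nat) < 2 \<longleftrightarrow> a = 0 \<or> a = 1" by auto

lemma aux_mult_eq: "aux_mult N M P a c = op_mult N (M a 0) (P 0 c) + op_mult N (M a 1) (P 1 c)"
  by (simp add: aux_mult_def op_add_eq)

lemma aux_mult_cong: "Z \<doteq> Z' \<Longrightarrow> W \<doteq> W' \<Longrightarrow> aux_mult N Z W \<doteq> aux_mult N Z' W'"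
  by (simp add: aeq_def aux_mult_eq)

lemma aux_mult_cong1: "Z \<doteq> Z' \<Longrightarrow> aux_mult N Z W \<doteq> aux_mult N Z' W"
  by (simp add: aux_mult_cong)
lemma aux_mult_cong2: "W \<doteq> W' \<Longrightarrow> aux_mult N Z W \<doteq> aux_mult N Z W'"
  by (simp add: aux_mult_cong)

lemma aux_mult_assoc: "aux_mult N (aux_mult N A B) C = aux_mult N A (aux_mult N B C)"
  by (simp add: fun_eq_iff aux_mult_eq op_mult_add_left op_mult_add_right op_mult_assoc add_ac
      del: plus_fun_apply)

definition Id :: "nat \<Rightarrow> aop" where "Id N = aux_scalar N id2"

definition sc :: "nat \<Rightarrow> complex \<Rightarrow> aop" where "sc N k = aux_scalar N (\<lambda>a b. k * id2 a b)"

definition aalg :: "nat \<Rightarrow> nat set \<Rightarrow> aop \<Rightarrow> bool" where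
  "aalg N S Z \<longleftrightarrow> (\<forall>a<2. \<forall>b<2. Z a b \<in> alg N S)"

definition awf :: "nat \<Rightarrow> aop \<Rightarrow> bool" where
  "awf N Z \<longleftrightarrow> (\<forall>a<2. \<forall>b<2. wf N (Z a b))"

lemma aalg_awf: "aalg N S Z \<Longrightarrow> awf N Z"
  by (auto simp: aalg_def awf_def intro: alg_wf)

lemma aalg_mono: "aalg N S Z \<Longrightarrow> S \<subseteq> T \<Longrightarrow> aalg N T Z"
  by (auto simp: aalg_def intro: alg_mono)

lemma aalg_mult: "aalg N S Z \<Longrightarrow> aalg N S W \<Longrightarrow> aalg N S (aux_mult N Z W)"
  by (auto simp: aalg_def aux_mult_eq intro!: alg.intros)

lemma aalg_scalar: "aalg N S (aux_scalar N X)"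
  by (auto simp: aalg_def aux_scalar_def intro!: alg.intros)

lemma aux_mult_sc_left: "awf N Z \<Longrightarrow> aux_mult N (sc N k) Z \<doteq> (\<lambda>a b. op_smult k (Z a b))"
  by (auto simp: aeq_def awf_def aux_mult_eq sc_def aux_scalar_def id2_def less2 op_mult_smult_left op_id_left)
lemma aux_mult_sc_right: "awf N Z \<Longrightarrow> aux_mult N Z (sc N k) \<doteq> (\<lambda>a b. op_smult k (Z a b))"
  by (auto simp: aeq_def awf_def aux_mult_eq sc_def aux_scalar_def id2_def less2 op_mult_smult_right op_id_right)

lemma aux_mult_scalar: "aux_mult N (aux_scalar N X) (aux_scalar N Y) \<doteq> aux_scalar N (m2 X Y)"
  by (auto simp: aeq_def aux_mult_eq aux_scalar_def m2_def op_mult_smult_left op_mult_smult_right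
      op_id_left op_smult_smult op_smult_add_scalar mult.commute)

definition asmult :: "complex \<Rightarrow> aop \<Rightarrow> aop" where
  "asmult k Z = (\<lambda>a b. op_smult k (Z a b))"

lemma aux_mult_asmult_left: "aux_mult N (asmult k Z) W = asmult k (aux_mult N Z W)"
  by (simp add: fun_eq_iff asmult_def aux_mult_eq op_mult_smult_left op_smult_add del: plus_fun_apply)
lemma aux_mult_asmult_right: "aux_mult N Z (asmult k W) = asmult k (aux_mult N Z W)"
  by (simp add: fun_eq_iff asmult_def aux_mult_eq op_mult_smult_right op_smult_add del: plus_fun_apply)
lemma asmult_asmult: "asmult k (asmult l Z) = asmult (k * l) Z"
  by (simp add: asmult_def op_smult_smult)
lemma asmult_cong: "Z \<doteq> W \<Longrightarrow> asmult k Z \<doteq> asmult k W"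
  by (simp add: aeq_def asmult_def)

lemma sc_asmult: "awf N Z \<Longrightarrow> aux_mult N Z (sc N k) \<doteq> asmult k Z"
  using aux_mult_sc_right by (simp add: asmult_def)
lemma sc_asmult_left: "awf N Z \<Longrightarrow> aux_mult N (sc N k) Z \<doteq> asmult k Z"
  using aux_mult_sc_left by (simp add: asmult_def)

lemma asmult_sc: "asmult k (sc N l) = sc N (k * l)"
  by (simp add: fun_eq_iff asmult_def sc_def aux_scalar_def op_smult_smult mult.assoc)

lemma awf_sc[simp]: "awf N (sc N k)" by (simp add: awf_def sc_def aux_scalar_def)
lemma awf_mult[simp]: "awf N Z \<Longrightarrow> awf N W \<Longrightarrow> awf N (aux_mult N Z W)"
  by (simp add: awf_def aux_mult_eq)
lemma awf_asmult[simp]: "awf N Z \<Longrightarrow> awf N (asmult k Z)"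
  by (simp add: awf_def asmult_def)
lemma awf_scalar[simp]: "awf N (aux_scalar N X)" by (simp add: awf_def aux_scalar_def)

section \<open>Embedding an auxiliary space into a quantum site\<close>

definition emb :: "nat \<Rightarrow> nat \<Rightarrow> aop \<Rightarrow> cop" where
  "emb N b Z = op_mult N (Z 0 0) (loc N b (Em 0 0)) + op_mult N (Z 0 1) (loc N b (Em 0 1))
             + op_mult N (Z 1 0) (loc N b (Em 1 0)) + op_mult N (Z 1 1) (loc N b (Em 1 1))"

lemma emb_cong: "Z \<doteq> W \<Longrightarrow> emb N b Z = emb N b W"
  by (simp add: aeq_def emb_def)

lemma m2_Em: "m2 (Em i j) (Em k l) = (if j = k then (\<lambda>a b. if a = i \<and> b = l \<and> j < 2 then 1 else 0) else (\<lambda>a b. 0))"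
  by (auto simp: m2_def Em_def fun_eq_iff)

lemma emb_mult:
  assumes W: "aalg N S W" and b: "b \<notin> S" "1 \<le> b" "b \<le> N"
  shows "emb N b (aux_mult N Z W) = op_mult N (emb N b Z) (emb N b W)"
proof -
  have comm: "op_mult N (loc N b Y) (W k l) = op_mult N (W k l) (loc N b Y)" if "k < 2" "l < 2" for k l Y
    using alg_comm_loc[of "W k l" N S b Y] W b that by (auto simp: aalg_def)
  have key: "op_mult N (op_mult N A (loc N b (Em i j))) (op_mult N (W k l) (loc N b (Em k' l')))
      = op_mult N (op_mult N A (W k l)) (loc N b (m2 (Em i j) (Em k' l')))" if "k < 2" "l < 2" for A i j k l k' l'
  proof -
    have "op_mult N (op_mult N A (loc N b (Em i j))) (op_mult N (W k l) (loc N b (Em k' l')))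
        = op_mult N A (op_mult N (op_mult N (loc N b (Em i j)) (W k l)) (loc N b (Em k' l')))"
      by (simp add: op_mult_assoc)
    also have "\<dots> = op_mult N A (op_mult N (op_mult N (W k l) (loc N b (Em i j))) (loc N b (Em k' l')))"
      by (simp add: comm[OF that])
    also have "\<dots> = op_mult N (op_mult N A (W k l)) (op_mult N (loc N b (Em i j)) (loc N b (Em k' l')))"
      by (simp add: op_mult_assoc)
    finally show ?thesis by (simp add: loc_mult_same[OF b(2,3)])
  qed
  have E: "loc N b (m2 (Em i j) (Em k l)) = (if j = k then loc N b (Em i l) else 0)" if "i < 2" "j < 2" "l < 2" for i j k l
  proof (cases "j = k")
    case True
    have "loc N b (m2 (Em i j) (Em k l)) = loc N b (Em i l)"
      by (rule loc_cong[OF b(2,3)]) (use True that in \<open>auto simp: m2_def Em_def\<close>)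
    then show ?thesis using True by simp
  next
    case False
    have "loc N b (m2 (Em i j) (Em k l)) = loc N b (\<lambda>a b. 0)"
      by (rule loc_cong[OF b(2,3)]) (use False that in \<open>auto simp: m2_def Em_def\<close>)
    then show ?thesis using False by (simp add: loc_zero)
  qed
  show ?thesis
    unfolding emb_def
    by (simp add: aux_mult_eq op_mult_add_left op_mult_add_right key E del: plus_fun_apply)
qed

lemma emb_scalar:
  assumes b: "1 \<le> b" "b \<le> N"
  shows "emb N b (aux_scalar N X) = loc N b X"
proof -
  have "loc N b X = loc N b (\<lambda>x y. X 0 0 * Em 0 0 x y + X 0 1 * Em 0 1 x y + X 1 0 * Em 1 0 x y + X 1 1 * Em 1 1 x y)"
    by (rule loc_cong[OF b]) (auto simp: Em_def less2)
  also have "\<dots> = op_smult (X 0 0) (loc N b (Em 0 0)) + op_smult (X 0 1) (loc N b (Em 0 1))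
     + op_smult (X 1 0) (loc N b (Em 1 0)) + op_smult (X 1 1) (loc N b (Em 1 1))"
    by (simp only: loc_add loc_smult)
  finally show ?thesis
    by (simp add: emb_def aux_scalar_def op_mult_smult_left op_id_left)
qed

lemma emb_alg:
  assumes "aalg N S Z" "1 \<le> b" "b \<le> N"
  shows "emb N b Z \<in> alg N (insert b S)"
proof -
  have z: "Z i j \<in> alg N (insert b S)" if "i < 2" "j < 2" for i j
    using assms that by (auto simp: aalg_def intro: alg_mono)
  have l: "loc N b Y \<in> alg N (insert b S)" for Y using assms by (auto intro: alg_loc)
  show ?thesis unfolding emb_def by (intro alg_add alg_mult z l) auto
qed

lemma emb_asmult: "emb N b (asmult k Z) = op_smult k (emb N b Z)"
  by (simp add: emb_def asmult_def op_mult_smult_left op_smult_add)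

lemma emb_sc: "1 \<le> b \<Longrightarrow> b \<le> N \<Longrightarrow> emb N b (sc N k) = op_smult k (op_id N)"
  by (simp add: sc_def emb_scalar loc_smult loc_id)


type_synonym smat = "nat \<Rightarrow> nat \<Rightarrow> complex"
type_synonym lmat = "nat \<Rightarrow> nat \<Rightarrow> smat"

definition la :: "nat \<Rightarrow> nat \<Rightarrow> lmat \<Rightarrow> aop" where
  "la N n F = (\<lambda>a b. loc N n (F a b))"

definition lmul :: "lmat \<Rightarrow> lmat \<Rightarrow> lmat" where
  "lmul F G = (\<lambda>a b x y. F a 0 x 0 * G 0 b 0 y + F a 0 x 1 * G 0 b 1 y + F a 1 x 0 * G 1 b 0 y + F a 1 x 1 * G 1 b 1 y)"

definition ladj :: "lmat \<Rightarrow> lmat" where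
  "ladj F = (\<lambda>x y. if x = 0 \<and> y = 0 then F 1 1 else if x = 0 \<and> y = 1 then (\<lambda>i j. - F 0 1 i j)
     else if x = 1 \<and> y = 0 then (\<lambda>i j. - F 1 0 i j) else if x = 1 \<and> y = 1 then F 0 0 else (\<lambda>i j. 0))"

definition adj :: "aop \<Rightarrow> aop" where
  "adj Z = (\<lambda>x y. if x = 0 \<and> y = 0 then Z 1 1 else if x = 0 \<and> y = 1 then - Z 0 1
     else if x = 1 \<and> y = 0 then - Z 1 0 else if x = 1 \<and> y = 1 then Z 0 0 else 0)"

definition lsc :: "complex \<Rightarrow> lmat" where
  "lsc k = (\<lambda>a b x y. k * id2 a b * id2 x y)"

definition leq :: "lmat \<Rightarrow> lmat \<Rightarrow> bool" where
  "leq F G \<longleftrightarrow> (\<forall>a<2. \<forall>b<2. \<forall>x<2. \<forall>y<2. F a b x y = G a b x y)"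

lemma la_mult: "1 \<le> n \<Longrightarrow> n \<le> N \<Longrightarrow> aux_mult N (la N n F) (la N n G) = la N n (lmul F G)"
proof -
  assume n: "1 \<le> n" "n \<le> N"
  have "loc N n (lmul F G a b) = loc N n (\<lambda>x y. m2 (F a 0) (G 0 b) x y + m2 (F a 1) (G 1 b) x y)" for a b
    by (rule loc_cong[OF n]) (simp add: lmul_def m2_def)
  then show ?thesis
    by (simp add: fun_eq_iff la_def aux_mult_eq loc_mult_same[OF n] loc_add del: plus_fun_apply)
qed

lemma loc_uminus: "loc N n (\<lambda>a b. - X a b) = - loc N n X"
  by (intro ext) (auto simp: loc_def)

lemma la_adj: "adj (la N n F) = la N n (ladj F)"
  by (auto simp: fun_eq_iff adj_def la_def ladj_def loc_uminus loc_zero simp del: uminus_apply)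

lemma la_leq: "1 \<le> n \<Longrightarrow> n \<le> N \<Longrightarrow> leq F G \<Longrightarrow> la N n F \<doteq> la N n G"
  by (auto simp: aeq_def la_def leq_def intro!: loc_cong)

lemma sc_la: "1 \<le> n \<Longrightarrow> n \<le> N \<Longrightarrow> sc N k \<doteq> la N n (lsc k)"
  by (auto simp: aeq_def la_def sc_def aux_scalar_def lsc_def loc_smult[symmetric] loc_id[symmetric]
      intro!: loc_cong)

lemma aalg_la: "1 \<le> n \<Longrightarrow> n \<le> N \<Longrightarrow> aalg N {n} (la N n F)"
  by (simp add: aalg_def la_def loc_alg)

lemma adj_cong: "Z \<doteq> W \<Longrightarrow> adj Z \<doteq> adj W"
  by (simp add: aeq_def adj_def)

lemma awf_adj[simp]: "awf N Z \<Longrightarrow> awf N (adj Z)"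
  by (auto simp: awf_def adj_def)

lemma aalg_adj: "aalg N S Z \<Longrightarrow> aalg N S (adj Z)"
  by (auto simp: aalg_def adj_def less2 intro: alg_uminus)

section \<open>The Lax matrix\<close>

definition lm :: "complex \<Rightarrow> complex \<Rightarrow> lmat" where
  "lm q u = (\<lambda>a b x y.
     if a = 0 \<and> b = 0 then (if x = 0 \<and> y = 0 then u * q - inverse (q * u) else if x = 1 \<and> y = 1 then u - inverse u else 0)
     else if a = 0 \<and> b = 1 then (if x = 1 \<and> y = 0 then q - inverse q else 0)
     else if a = 1 \<and> b = 0 then (if x = 0 \<and> y = 1 then q - inverse q else 0)
     else if a = 1 \<and> b = 1 then (if x = 0 \<and> y = 0 then u - inverse u else if x = 1 \<and> y = 1 then u * q - inverse (q * u) else 0)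
     else 0)"

lemma lax_la:
  assumes n: "1 \<le> n" "n \<le> N"
  shows "lax N q n u \<doteq> la N n (lm q u)"
proof (rule aeqI)
  fix a b :: nat assume ab: "a < 2" "b < 2"
  have e00: "op_add (op_smult (xp q u) (op_id N)) (op_smult (xm q u) (loc N n sigz)) = loc N n (lm q u 0 0)"
  proof -
    have "loc N n (lm q u 0 0) = loc N n (\<lambda>x y. xp q u * id2 x y + xm q u * sigz x y)"
      by (rule loc_cong[OF n]) (auto simp: lm_def id2_def sigz_def xp_def xm_def less2 field_simps)
    then show ?thesis by (simp add: op_add_eq loc_add loc_smult loc_id[OF n])
  qed
  have e11: "op_diff (op_smult (xp q u) (op_id N)) (op_smult (xm q u) (loc N n sigz)) = loc N n (lm q u 1 1)"
  proof -
    have "loc N n (lm q u 1 1) = loc N n (\<lambda>x y. xp q u * id2 x y - xm q u * sigz x y)"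
      by (rule loc_cong[OF n]) (auto simp: lm_def id2_def sigz_def xp_def xm_def less2 field_simps)
    then show ?thesis by (simp add: op_diff_eq loc_diff loc_smult loc_id[OF n])
  qed
  have e01: "op_smult (q - inverse q) (loc N n sigm) = loc N n (lm q u 0 1)"
  proof -
    have "loc N n (lm q u 0 1) = loc N n (\<lambda>x y. (q - inverse q) * sigm x y)"
      by (rule loc_cong[OF n]) (auto simp: lm_def sigm_def less2)
    then show ?thesis by (simp add: loc_smult)
  qed
  have e10: "op_smult (q - inverse q) (loc N n sigp) = loc N n (lm q u 1 0)"
  proof -
    have "loc N n (lm q u 1 0) = loc N n (\<lambda>x y. (q - inverse q) * sigp x y)"
      by (rule loc_cong[OF n]) (auto simp: lm_def sigp_def less2)
    then show ?thesis by (simp add: loc_smult)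
  qed
  show "lax N q n u a b = la N n (lm q u) a b"
    using ab e00 e11 e01 e10 by (auto simp: lax_def la_def less2)
qed

lemma aalg_lax: "1 \<le> n \<Longrightarrow> n \<le> N \<Longrightarrow> aalg N {n} (lax N q n u)"
  using lax_la[of n N q u] aalg_la[of n N "lm q u"] by (simp add: aalg_def aeq_def)


definition delta :: "complex \<Rightarrow> complex \<Rightarrow> complex" where
  "delta q u = (u * q - inverse (u * q)) * (u / q - q / u)"

definition rho :: "complex \<Rightarrow> complex \<Rightarrow> complex" where
  "rho q x = (q - inverse q)^2 - (x - inverse x)^2"

definition eps :: "nat \<Rightarrow> nat \<Rightarrow> complex" where
  "eps a b = (if a = 0 \<and> b = 1 then 1 else if a = 1 \<and> b = 0 then -1 else 0)"

lemma fusion_local: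
  assumes "q \<noteq> 0" "u \<noteq> 0"
  shows "leq (lmul (lm q u) (ladj (lm q (u / q)))) (lsc (delta q u))"
  using assms unfolding leq_def
  by (auto simp: less2 lmul_def ladj_def lm_def lsc_def id2_def delta_def field_simps)

lemma unit_local:
  assumes "q \<noteq> 0" "x \<noteq> 0"
  shows "leq (lmul (lm q x) (lm q (inverse x))) (lsc (rho q x))"
  using assms unfolding leq_def
  by (auto simp: less2 lmul_def lm_def lsc_def id2_def rho_def field_simps power2_eq_square)

lemma swap_local: "a < 2 \<Longrightarrow> b < 2 \<Longrightarrow> x < 2 \<Longrightarrow> y < 2 \<Longrightarrow> lm q u a b x y = lm q u x y a b"
  by (auto simp: less2 lm_def)

lemma lm_one: "a < 2 \<Longrightarrow> b < 2 \<Longrightarrow> x < 2 \<Longrightarrow> y < 2 \<Longrightarrow> lm q 1 a b x y = (q - inverse q) * Em b a x y"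
  by (auto simp: less2 lm_def Em_def)

lemma lm_invq: "q \<noteq> 0 \<Longrightarrow> a < 2 \<Longrightarrow> b < 2 \<Longrightarrow> x < 2 \<Longrightarrow> y < 2 \<Longrightarrow>
    lm q (inverse q) a b x y = - (q - inverse q) * (eps a x * eps b y)"
  by (auto simp: less2 lm_def eps_def field_simps)


definition rr :: "complex \<Rightarrow> complex \<Rightarrow> nat \<Rightarrow> nat \<Rightarrow> nat \<Rightarrow> nat \<Rightarrow> complex" where
  "rr q x a a' b b' = lm q x a b a' b'"

lemma rtt_local:
  assumes "q \<noteq> 0" "u \<noteq> 0" "v \<noteq> 0" "a < 2" "a' < 2" "e < 2" "e' < 2" "i < 2" "j < 2"
  shows "(\<Sum>b<2. \<Sum>b'<2. rr q (u / v) a a' b b' * m2 (lm q u b e) (lm q v b' e') i j)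
       = (\<Sum>b<2. \<Sum>b'<2. rr q (u / v) b b' e e' * m2 (lm q v a' b') (lm q u a b) i j)"
  using assms unfolding less2
  by (auto simp: rr_def m2_def lm_def numeral_2_eq_2 lessThan_Suc field_simps)


definition acomm :: "nat \<Rightarrow> aop \<Rightarrow> aop \<Rightarrow> bool" where
  "acomm N A B \<longleftrightarrow> (\<forall>a<2. \<forall>b<2. \<forall>c<2. \<forall>d<2. op_mult N (A a b) (B c d) = op_mult N (B c d) (A a b))"

lemma acomm_alg: "aalg N S A \<Longrightarrow> aalg N T B \<Longrightarrow> S \<inter> T = {} \<Longrightarrow> acomm N A B"
  unfolding acomm_def aalg_def by (metis alg_comm)

lemma adj_mult: "acomm N A B \<Longrightarrow> adj (aux_mult N A B) \<doteq> aux_mult N (adj B) (adj A)"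
  unfolding acomm_def
  by (auto simp: aeq_def adj_def aux_mult_eq less2 op_mult_uminus_left op_mult_uminus_right add.commute)

lemma Id_sc: "Id N = sc N 1" by (simp add: Id_def sc_def)

lemma adj_sc: "adj (sc N k) \<doteq> sc N k"
  by (auto simp: aeq_def adj_def sc_def aux_scalar_def id2_def less2)

definition fus :: "nat \<Rightarrow> aop \<Rightarrow> aop \<Rightarrow> complex \<Rightarrow> bool" where
  "fus N A A' k \<longleftrightarrow> aux_mult N A (adj A') \<doteq> sc N k"

lemma fus_mult:
  assumes fA: "fus N A A' kA" and fB: "fus N B B' kB"
    and aA: "awf N A" and aA': "aalg N S A'" and aB': "aalg N T B'" and dj: "S \<inter> T = {}"
  shows "fus N (aux_mult N A B) (aux_mult N A' B') (kA * kB)"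
proof -
  have "aux_mult N (aux_mult N A B) (adj (aux_mult N A' B'))
      \<doteq> aux_mult N (aux_mult N A B) (aux_mult N (adj B') (adj A'))"
    by (rule aux_mult_cong2, rule adj_mult, rule acomm_alg[OF aA' aB' dj])
  also have "\<dots> = aux_mult N A (aux_mult N (aux_mult N B (adj B')) (adj A'))"
    by (simp add: aux_mult_assoc)
  also have "\<dots> \<doteq> aux_mult N A (aux_mult N (sc N kB) (adj A'))"
    using fB unfolding fus_def by (intro aux_mult_cong2 aux_mult_cong1)
  also have "\<dots> \<doteq> aux_mult N A (asmult kB (adj A'))"
    using aalg_awf[OF aA'] by (intro aux_mult_cong2 sc_asmult_left) simp
  also have "\<dots> = asmult kB (aux_mult N A (adj A'))"
    by (simp add: aux_mult_asmult_right)
  also have "\<dots> \<doteq> asmult kB (sc N kA)"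
    using fA unfolding fus_def by (rule asmult_cong)
  also have "\<dots> = sc N (kA * kB)" by (simp add: asmult_sc mult.commute)
  finally show ?thesis unfolding fus_def .
qed

lemma fus_Id: "fus N (Id N) (Id N) 1"
proof -
  have "aux_mult N (Id N) (adj (Id N)) \<doteq> aux_mult N (sc N 1) (sc N 1)"
    unfolding Id_sc by (intro aux_mult_cong2 adj_sc)
  also have "\<dots> \<doteq> asmult 1 (sc N 1)" by (rule sc_asmult_left) simp
  also have "\<dots> = sc N 1" by (simp add: asmult_sc)
  finally show ?thesis by (simp add: fus_def)
qed

lemma fus_cong: "fus N A A' k \<Longrightarrow> A \<doteq> B \<Longrightarrow> A' \<doteq> B' \<Longrightarrow> fus N B B' k"
  unfolding fus_def
  by (meson aeq_sym aeq_trans adj_cong aux_mult_cong)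

lemma fus_lax:
  assumes n: "1 \<le> n" "n \<le> N" and q: "q \<noteq> 0" and u: "u \<noteq> 0"
  shows "fus N (lax N q n u) (lax N q n (u / q)) (delta q u)"
proof -
  have "aux_mult N (la N n (lm q u)) (adj (la N n (lm q (u / q)))) = la N n (lmul (lm q u) (ladj (lm q (u / q))))"
    by (simp add: la_adj la_mult[OF n])
  also have "\<dots> \<doteq> la N n (lsc (delta q u))"
    by (rule la_leq[OF n fusion_local[OF q u]])
  also have "\<dots> \<doteq> sc N (delta q u)" by (rule aeq_sym, rule sc_la[OF n])
  finally have "fus N (la N n (lm q u)) (la N n (lm q (u / q))) (delta q u)" by (simp add: fus_def)
  then show ?thesis
    by (rule fus_cong) (use lax_la[OF n] aeq_sym in blast)+
qed

lemma aalg_Id: "aalg N S (Id N)" by (simp add: Id_def aalg_scalar)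
lemma awf_Id[simp]: "awf N (Id N)" by (simp add: Id_def)

lemma aalg_monodr: "k \<le> N \<Longrightarrow> aalg N {1..k} (mono N q eta k l)"
proof (induction k)
  case 0 then show ?case by (simp add: aalg_scalar)
next
  case (Suc k)
  have "aalg N {1..Suc k} (lax N q (Suc k) (l / eta (Suc k)))"
    by (rule aalg_mono[OF aalg_lax]) (use Suc.prems in auto)
  moreover have "aalg N {1..Suc k} (mono N q eta k l)"
    using Suc by (auto intro: aalg_mono)
  ultimately show ?case by (simp add: aalg_mult)
qed

primrec monoR :: "nat \<Rightarrow> complex \<Rightarrow> (nat \<Rightarrow> complex) \<Rightarrow> nat \<Rightarrow> nat \<Rightarrow> complex \<Rightarrow> aop" where
  "monoR N q eta m 0 l = Id N"
| "monoR N q eta m (Suc k) l = (if Suc k \<le> m then Id N else aux_mult N (lax N q (Suc k) (l / eta (Suc k))) (monoR N q eta m k l))"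

lemma aalg_monoR: "k \<le> N \<Longrightarrow> aalg N {Suc m..k} (monoR N q eta m k l)"
proof (induction k)
  case 0 then show ?case by (simp add: aalg_Id)
next
  case (Suc k)
  show ?case
  proof (cases "Suc k \<le> m")
    case True then show ?thesis by (simp add: aalg_Id)
  next
    case False
    have "aalg N {Suc m..Suc k} (lax N q (Suc k) (l / eta (Suc k)))"
      by (rule aalg_mono[OF aalg_lax]) (use Suc.prems False in auto)
    moreover have "aalg N {Suc m..Suc k} (monoR N q eta m k l)"
      using Suc by (auto intro: aalg_mono)
    ultimately show ?thesis using False by (simp add: aalg_mult)
  qed
qed

lemma aux_mult_Id_left: "awf N Z \<Longrightarrow> aux_mult N (Id N) Z \<doteq> Z"
  using sc_asmult_left[of N Z 1] by (simp add: Id_sc asmult_def)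
lemma aux_mult_Id_right: "awf N Z \<Longrightarrow> aux_mult N Z (Id N) \<doteq> Z"
  using sc_asmult[of N Z 1] by (simp add: Id_sc asmult_def)

lemma mono_split: "m \<le> k \<Longrightarrow> k \<le> N \<Longrightarrow> mono N q eta k l \<doteq> aux_mult N (monoR N q eta m k l) (mono N q eta m l)"
proof (induction k)
  case 0
  then show ?case using aux_mult_Id_left[of N "mono N q eta 0 l"] aalg_awf[OF aalg_monodr[of 0 N q eta l]]
    by (simp add: aeq_sym)
next
  case (Suc k)
  show ?case
  proof (cases "Suc k \<le> m")
    case True
    then have "m = Suc k" using Suc.prems by simp
    then show ?thesis using aux_mult_Id_left[of N "mono N q eta (Suc k) l"] aalg_awf[OF aalg_monodr[of "Suc k" N q eta l]] Suc.prems
      by (simp add: aeq_sym)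
  next
    case False
    then have "mono N q eta k l \<doteq> aux_mult N (monoR N q eta m k l) (mono N q eta m l)"
      using Suc by simp
    then have "mono N q eta (Suc k) l \<doteq> aux_mult N (lax N q (Suc k) (l / eta (Suc k))) (aux_mult N (monoR N q eta m k l) (mono N q eta m l))"
      by (simp add: aux_mult_cong2)
    then show ?thesis using False by (simp add: aux_mult_assoc)
  qed
qed

lemma fus_mono:
  assumes k: "k \<le> N" and q: "q \<noteq> 0" and l: "l \<noteq> 0" and eta: "\<forall>j\<in>{1..N}. eta j \<noteq> 0"
  shows "fus N (mono N q eta k l) (mono N q eta k (l / q)) (\<Prod>j=1..k. delta q (l / eta j))"
  using k
proof (induction k)
  case 0 then show ?case using fus_Id by (simp add: Id_def)
next
  case (Suc k)
  have e: "eta (Suc k) \<noteq> 0" using eta Suc.prems by auto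
  have f1: "fus N (lax N q (Suc k) (l / eta (Suc k))) (lax N q (Suc k) (l / q / eta (Suc k))) (delta q (l / eta (Suc k)))"
    using fus_lax[of "Suc k" N q "l / eta (Suc k)"] Suc.prems q l e by (simp add: divide_divide_eq_left mult.commute)
  have "fus N (aux_mult N (lax N q (Suc k) (l / eta (Suc k))) (mono N q eta k l))
     (aux_mult N (lax N q (Suc k) (l / q / eta (Suc k))) (mono N q eta k (l / q)))
     (delta q (l / eta (Suc k)) * (\<Prod>j=1..k. delta q (l / eta j)))"
    by (rule fus_mult[OF f1 Suc.IH _ aalg_lax[of "Suc k" N q] aalg_monodr[of k N q eta]])
       (use Suc.prems aalg_awf[OF aalg_lax[of "Suc k" N q]] in auto)
  then show ?case by (simp add: prod.nat_ivl_Suc' mult.commute)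
qed

lemma fus_monoR:
  assumes k: "k \<le> N" and q: "q \<noteq> 0" and l: "l \<noteq> 0" and eta: "\<forall>j\<in>{1..N}. eta j \<noteq> 0"
  shows "fus N (monoR N q eta m k l) (monoR N q eta m k (l / q)) (\<Prod>j=Suc m..k. delta q (l / eta j))"
  using k
proof (induction k)
  case 0 then show ?case using fus_Id by simp
next
  case (Suc k)
  show ?case
  proof (cases "Suc k \<le> m")
    case True then show ?thesis using fus_Id by simp
  next
    case False
    have e: "eta (Suc k) \<noteq> 0" using eta Suc.prems by auto
    have f1: "fus N (lax N q (Suc k) (l / eta (Suc k))) (lax N q (Suc k) (l / q / eta (Suc k))) (delta q (l / eta (Suc k)))"
      using fus_lax[of "Suc k" N q "l / eta (Suc k)"] Suc.prems q l e by (simp add: divide_divide_eq_left mult.commute)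
    have "fus N (aux_mult N (lax N q (Suc k) (l / eta (Suc k))) (monoR N q eta m k l))
       (aux_mult N (lax N q (Suc k) (l / q / eta (Suc k))) (monoR N q eta m k (l / q)))
       (delta q (l / eta (Suc k)) * (\<Prod>j=Suc m..k. delta q (l / eta j)))"
      by (rule fus_mult[OF f1 Suc.IH _ aalg_lax[of "Suc k" N q] aalg_monoR[of k N m q eta]])
         (use Suc.prems False aalg_awf[OF aalg_lax[of "Suc k" N q]] in auto)
    moreover have "{Suc m..Suc k} = insert (Suc k) {Suc m..k}" using False by auto
    ultimately show ?thesis using False by (simp add: mult.commute)
  qed
qed


section \<open>Quantum determinant\<close>

lemma qdet_as_fus: "qdet N q eta l = aux_mult N (monodromy N q eta l) (adj (monodromy N q eta (l / q))) 0 0"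
  by (simp add: qdet_def opA_def opB_def opC_def opD_def adj_def aux_mult_eq op_diff_eq op_mult_uminus_right)

lemma qdet_formula:
  assumes q: "q \<noteq> 0" and l: "l \<noteq> 0" and eta: "\<forall>j\<in>{1..N}. eta j \<noteq> 0"
  shows "qdet N q eta l = op_smult (\<Prod>j=1..N. delta q (l / eta j)) (op_id N)"
proof -
  have "aux_mult N (monodromy N q eta l) (adj (monodromy N q eta (l / q))) \<doteq> sc N (\<Prod>j=1..N. delta q (l / eta j))"
    using fus_mono[OF le_refl q l eta] by (simp add: fus_def monodromy_def)
  then show ?thesis unfolding qdet_as_fus
    by (auto dest!: aeqD[of _ _ 0 0] simp: sc_def aux_scalar_def id2_def)
qed

lemma ad_prod:
  assumes q: "q \<noteq> 0" and l: "l \<noteq> 0" and eta: "\<forall>j\<in>{1..N}. eta j \<noteq> 0"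
  shows "afun N q eta l * dfun N eta (l / q) = - (\<Prod>j=1..N. delta q (l / eta j))"
proof -
  have "(l * q / eta j - eta j / (l * q)) * (l / q / eta j - eta j / (l / q)) = delta q (l / eta j)"
    if "j \<in> {1..N}" for j
    using q l eta that by (auto simp: delta_def field_simps)
  then show ?thesis
    by (simp add: afun_def dfun_def prod.distrib[symmetric])
qed

section \<open>Special points\<close>

definition Pm :: "nat \<Rightarrow> nat \<Rightarrow> aop" where
  "Pm N n = (\<lambda>a b. loc N n (Em b a))"

definition Sm :: "nat \<Rightarrow> nat \<Rightarrow> aop" where
  "Sm N n = (\<lambda>a b. if a = 0 \<and> b = 0 then loc N n (Em 1 1) else if a = 0 \<and> b = 1 then - loc N n (Em 1 0)
     else if a = 1 \<and> b = 0 then - loc N n (Em 0 1) else if a = 1 \<and> b = 1 then loc N n (Em 0 0) else 0)"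

lemma lax_one:
  assumes n: "1 \<le> n" "n \<le> N"
  shows "lax N q n 1 \<doteq> asmult (q - inverse q) (Pm N n)"
proof -
  have "la N n (lm q 1) \<doteq> asmult (q - inverse q) (Pm N n)"
  proof (rule aeqI)
    fix a b :: nat assume ab: "a < 2" "b < 2"
    have "loc N n (lm q 1 a b) = loc N n (\<lambda>x y. (q - inverse q) * Em b a x y)"
      by (rule loc_cong[OF n]) (use ab lm_one in auto)
    then show "la N n (lm q 1) a b = asmult (q - inverse q) (Pm N n) a b"
      by (simp add: la_def asmult_def Pm_def loc_smult)
  qed
  then show ?thesis using lax_la[OF n] aeq_trans by blast
qed

lemma lax_invq:
  assumes n: "1 \<le> n" "n \<le> N" and q: "q \<noteq> 0"
  shows "lax N q n (inverse q) \<doteq> asmult (- (q - inverse q)) (Sm N n)"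
proof -
  have "la N n (lm q (inverse q)) \<doteq> asmult (- (q - inverse q)) (Sm N n)"
  proof (rule aeqI)
    fix a b :: nat assume ab: "a < 2" "b < 2"
    have e: "loc N n (lm q (inverse q) a b) = loc N n (\<lambda>x y. - (q - inverse q) * (eps a x * eps b y))"
      by (rule loc_cong[OF n]) (use ab lm_invq[OF q] in auto)
    have "loc N n (\<lambda>x y. - (q - inverse q) * (eps a x * eps b y)) = op_smult (- (q - inverse q)) (Sm N n a b)"
    proof -
      have "loc N n (\<lambda>x y. eps a x * eps b y) = Sm N n a b"
        using ab unfolding less2
        by (auto simp: Sm_def eps_def loc_uminus[symmetric] intro!: loc_cong[OF n]; auto simp: Em_def less2)
      then show ?thesis using loc_smult[of N n "-(q - inverse q)" "\<lambda>x y. eps a x * eps b y"] by simp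
    qed
    then show "la N n (lm q (inverse q)) a b = asmult (- (q - inverse q)) (Sm N n) a b"
      by (simp add: la_def asmult_def e)
  qed
  then show ?thesis using lax_la[OF n] aeq_trans by blast
qed

lemma ptrace_cong: "Z \<doteq> W \<Longrightarrow> ptrace Z = ptrace W"
  by (simp add: aeq_def ptrace_def)

lemma ptrace_asmult: "ptrace (asmult k Z) = op_smult k (ptrace Z)"
  by (simp add: ptrace_def asmult_def op_add_eq op_smult_add)

lemma trP:
  assumes A: "aalg N S A" and B: "aalg N T B" and dj: "S \<inter> T = {}" and nS: "n \<notin> S" and nT: "n \<notin> T"
    and n: "1 \<le> n" "n \<le> N"
  shows "ptrace (aux_mult N A (aux_mult N (Pm N n) B)) = emb N n (aux_mult N B A)"
proof -
  have c1: "op_mult N (loc N n Y) (B j a) = op_mult N (B j a) (loc N n Y)" if "j < 2" "a < 2" for Y j a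
    using alg_comm_loc[of "B j a" N T n Y] B nT n that by (auto simp: aalg_def)
  have c2: "op_mult N (A a i) (B j a') = op_mult N (B j a') (A a i)" if "j < 2" "a < 2" "i < 2" "a' < 2" for a i j a'
    using acomm_alg[OF A B dj] that by (auto simp: acomm_def)
  have k: "op_mult N (A a i) (op_mult N (loc N n Y) (B j a')) = op_mult N (op_mult N (B j a') (A a i)) (loc N n Y)"
    if "j < 2" "a < 2" "i < 2" "a' < 2" for Y a i j a'
    using that by (simp add: c1 c2 op_mult_assoc[symmetric])
  show ?thesis
    by (simp add: ptrace_def emb_def aux_mult_eq op_add_eq Pm_def op_mult_add_left op_mult_add_right k
        add_ac del: plus_fun_apply)
qed

lemma trS:
  assumes A: "aalg N S A" and B: "aalg N T B" and dj: "S \<inter> T = {}" and nS: "n \<notin> S" and nT: "n \<notin> T"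
    and n: "1 \<le> n" "n \<le> N"
  shows "ptrace (aux_mult N A (aux_mult N (Sm N n) B)) = emb N n (adj (aux_mult N B A))"
proof -
  have c1: "op_mult N (loc N n Y) (B j a) = op_mult N (B j a) (loc N n Y)" if "j < 2" "a < 2" for Y j a
    using alg_comm_loc[of "B j a" N T n Y] B nT n that by (auto simp: aalg_def)
  have c2: "op_mult N (A a i) (B j a') = op_mult N (B j a') (A a i)" if "j < 2" "a < 2" "i < 2" "a' < 2" for a i j a'
    using acomm_alg[OF A B dj] that by (auto simp: acomm_def)
  have k: "op_mult N (A a i) (op_mult N (loc N n Y) (B j a')) = op_mult N (op_mult N (B j a') (A a i)) (loc N n Y)"
    if "j < 2" "a < 2" "i < 2" "a' < 2" for Y a i j a'
    using that by (simp add: c1 c2 op_mult_assoc[symmetric])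
  have k2: "op_mult N (A a i) (op_mult N (- loc N n Y) (B j a')) = - op_mult N (op_mult N (B j a') (A a i)) (loc N n Y)"
    if "j < 2" "a < 2" "i < 2" "a' < 2" for Y a i j a'
    using that by (simp add: op_mult_uminus_left op_mult_uminus_right k)
  show ?thesis
    by (simp add: ptrace_def emb_def aux_mult_eq op_add_eq Sm_def adj_def op_mult_add_left op_mult_add_right k k2
        op_mult_uminus_left op_mult_diff_left op_mult_diff_right algebra_simps del: plus_fun_apply)
qed


definition cq :: "complex \<Rightarrow> complex" where "cq q = q - inverse q"

lemma ptrace_scalar:
  assumes "awf N M"
  shows "ptrace (aux_mult N M (aux_scalar N W)) = op_smult (W 0 0) (M 0 0) + op_smult (W 1 0) (M 0 1)
      + op_smult (W 0 1) (M 1 0) + op_smult (W 1 1) (M 1 1)"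
  using assms by (simp add: ptrace_def aux_mult_eq aux_scalar_def op_add_eq op_mult_smult_id awf_def add_ac)

lemma sigx_00[simp]: "sigx 0 0 = 0" and sigx_01[simp]: "sigx 0 1 = 1" and sigx_10[simp]: "sigx 1 0 = 1" and sigx_11[simp]: "sigx 1 1 = 0"
  by (simp_all add: sigx_def)

lemma Tbar_ptrace: "awf N (monodromy N q eta l) \<Longrightarrow> Tbar N q eta l = ptrace (aux_mult N (monodromy N q eta l) (aux_scalar N sigx))"
  by (simp add: ptrace_scalar Tbar_def opB_def opC_def op_add_eq sigx_def add.commute)

locale setting =
  fixes N :: nat and q :: complex and eta :: "nat \<Rightarrow> complex"
  assumes q: "q \<noteq> 0" and eta: "\<forall>j\<in>{1..N}. eta j \<noteq> 0"
begin

abbreviation "M l \<equiv> monodromy N q eta l"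
abbreviation "Lg b l \<equiv> mono N q eta (b - 1) l"
abbreviation "Gr b l \<equiv> monoR N q eta b N l"
abbreviation "T l \<equiv> Tbar N q eta l"

lemma awf_M: "awf N (M l)"
  using aalg_awf[OF aalg_monodr[of N N q eta l]] by (simp add: monodromy_def)

lemma aalg_Lg: "b \<le> N \<Longrightarrow> aalg N {1..b-1} (Lg b l)"
  by (rule aalg_monodr) simp

lemma aalg_Gr: "aalg N {Suc b..N} (Gr b l)"
  by (rule aalg_monoR) simp

lemma mono_decomp:
  assumes b: "1 \<le> b" "b \<le> N"
  shows "M l \<doteq> aux_mult N (Gr b l) (aux_mult N (lax N q b (l / eta b)) (Lg b l))"
proof -
  have "M l \<doteq> aux_mult N (Gr b l) (mono N q eta b l)"
    unfolding monodromy_def by (rule mono_split) (use b in auto)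
  moreover have "mono N q eta b l = aux_mult N (lax N q b (l / eta b)) (Lg b l)"
    using b by (cases b) auto
  ultimately show ?thesis by simp
qed

lemma aalg_WL: "b \<le> N \<Longrightarrow> aalg N {1..b-1} (aux_mult N (Lg b l) (aux_scalar N W))"
  by (intro aalg_mult aalg_Lg aalg_scalar)

lemma TW:
  assumes b: "1 \<le> b" "b \<le> N"
  shows "ptrace (aux_mult N (M (eta b)) (aux_scalar N W))
       = op_smult (cq q) (emb N b (aux_mult N (aux_mult N (Lg b (eta b)) (aux_scalar N W)) (Gr b (eta b))))"
proof -
  have e: "eta b / eta b = 1" using eta b by auto
  have "aux_mult N (M (eta b)) (aux_scalar N W)
     \<doteq> aux_mult N (aux_mult N (Gr b (eta b)) (aux_mult N (lax N q b 1) (Lg b (eta b)))) (aux_scalar N W)"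
    using mono_decomp[OF b, of "eta b"] e by (simp add: aux_mult_cong1)
  also have "\<dots> \<doteq> aux_mult N (aux_mult N (Gr b (eta b)) (aux_mult N (asmult (cq q) (Pm N b)) (Lg b (eta b)))) (aux_scalar N W)"
    by (intro aux_mult_cong1 aux_mult_cong2 lax_one[OF b, of q, folded cq_def])
  also have "\<dots> = asmult (cq q) (aux_mult N (Gr b (eta b)) (aux_mult N (Pm N b) (aux_mult N (Lg b (eta b)) (aux_scalar N W))))"
    by (simp add: aux_mult_asmult_left aux_mult_asmult_right aux_mult_assoc)
  finally have "ptrace (aux_mult N (M (eta b)) (aux_scalar N W)) =
      op_smult (cq q) (ptrace (aux_mult N (Gr b (eta b)) (aux_mult N (Pm N b) (aux_mult N (Lg b (eta b)) (aux_scalar N W)))))"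
    by (simp add: ptrace_cong ptrace_asmult)
  also have "\<dots> = op_smult (cq q) (emb N b (aux_mult N (aux_mult N (Lg b (eta b)) (aux_scalar N W)) (Gr b (eta b))))"
    by (subst trP[OF aalg_Gr aalg_WL]) (use b in auto)
  finally show ?thesis .
qed

lemma TW':
  assumes b: "1 \<le> b" "b \<le> N"
  shows "ptrace (aux_mult N (M (eta b / q)) (aux_scalar N W))
       = op_smult (- cq q) (emb N b (adj (aux_mult N (aux_mult N (Lg b (eta b / q)) (aux_scalar N W)) (Gr b (eta b / q)))))"
proof -
  have e: "eta b / q / eta b = inverse q" using eta b by (auto simp: field_simps)
  have "aux_mult N (M (eta b / q)) (aux_scalar N W)
     \<doteq> aux_mult N (aux_mult N (Gr b (eta b / q)) (aux_mult N (lax N q b (inverse q)) (Lg b (eta b / q)))) (aux_scalar N W)"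
    using mono_decomp[OF b, of "eta b / q"] e by (simp add: aux_mult_cong1)
  also have "\<dots> \<doteq> aux_mult N (aux_mult N (Gr b (eta b / q)) (aux_mult N (asmult (- cq q) (Sm N b)) (Lg b (eta b / q)))) (aux_scalar N W)"
    by (intro aux_mult_cong1 aux_mult_cong2 lax_invq[OF b q, folded cq_def])
  also have "\<dots> = asmult (- cq q) (aux_mult N (Gr b (eta b / q)) (aux_mult N (Sm N b) (aux_mult N (Lg b (eta b / q)) (aux_scalar N W))))"
    by (simp add: aux_mult_asmult_left aux_mult_asmult_right aux_mult_assoc)
  finally have "ptrace (aux_mult N (M (eta b / q)) (aux_scalar N W)) =
      op_smult (- cq q) (ptrace (aux_mult N (Gr b (eta b / q)) (aux_mult N (Sm N b) (aux_mult N (Lg b (eta b / q)) (aux_scalar N W)))))"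
    by (simp add: ptrace_cong ptrace_asmult)
  also have "\<dots> = op_smult (- cq q) (emb N b (adj (aux_mult N (aux_mult N (Lg b (eta b / q)) (aux_scalar N W)) (Gr b (eta b / q)))))"
    by (subst trS[OF aalg_Gr aalg_WL]) (use b in auto)
  finally show ?thesis .
qed

end


definition sadj :: "smat \<Rightarrow> smat" where
  "sadj V = (\<lambda>x y. if x = 0 \<and> y = 0 then V 1 1 else if x = 0 \<and> y = 1 then - V 0 1
     else if x = 1 \<and> y = 0 then - V 1 0 else if x = 1 \<and> y = 1 then V 0 0 else 0)"

lemma adj_scalar: "adj (aux_scalar N V) \<doteq> aux_scalar N (sadj V)"
  by (auto simp: aeq_def adj_def aux_scalar_def sadj_def less2 op_smult_minus_scalar)

lemma aux_scalar_cong: "(\<And>a b. a < 2 \<Longrightarrow> b < 2 \<Longrightarrow> V a b = W a b) \<Longrightarrow> aux_scalar N V \<doteq> aux_scalar N W"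
  by (simp add: aeq_def aux_scalar_def)

lemma aux_scalar_neg: "aux_scalar N (\<lambda>a b. - V a b) = asmult (-1) (aux_scalar N V)"
  by (simp add: fun_eq_iff aux_scalar_def asmult_def op_smult_smult)

lemma emb_cong_eq: "Z \<doteq> W \<Longrightarrow> emb N b Z = emb N b W" by (rule emb_cong)

lemma transp_trace:
  assumes "awf N M'"
  shows "ptrace (aux_mult N (aux_mult N (aux_mult N (aux_mult N (aux_scalar N sigz) (ptransp M')) (aux_scalar N sigz))
              (aux_scalar N X)) (aux_scalar N sigx))
       = ptrace (aux_mult N M' (aux_scalar N (\<lambda>a b. sigz a a * sigz b b * m2 X sigx b a)))"
  using assms
  by (simp add: ptrace_def aux_mult_eq aux_scalar_def ptransp_def awf_def op_add_eq op_mult_smult_left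
      op_mult_smult_right op_id_left op_id_right op_mult_add_left op_mult_add_right sigz_def sigx_def m2_def
      op_smult_smult del: plus_fun_apply)

context setting
begin

lemma aalg_Gr_b: "aalg N ({1..b-1} \<union> {Suc b..N}) (Gr b l)"
  by (rule aalg_mono[OF aalg_Gr]) auto
lemma aalg_WL_b: "b \<le> N \<Longrightarrow> aalg N ({1..b-1} \<union> {Suc b..N}) (aux_mult N (Lg b l) (aux_scalar N W))"
  by (rule aalg_mono[OF aalg_WL]) auto

lemma K:
  assumes b: "1 \<le> b" "b \<le> N"
  defines "dG \<equiv> (\<Prod>j=Suc b..N. delta q (eta b / eta j))"
  shows "aux_mult N (aux_mult N (aux_mult N (Lg b (eta b)) (aux_scalar N W)) (Gr b (eta b)))
           (adj (aux_mult N (aux_mult N (Lg b (eta b / q)) (aux_scalar N V)) (Gr b (eta b / q))))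
     \<doteq> asmult dG (aux_mult N (Lg b (eta b)) (aux_mult N (aux_scalar N (m2 W (sadj V))) (adj (Lg b (eta b / q)))))"
proof -
  let ?L = "Lg b (eta b)" and ?L' = "Lg b (eta b / q)" and ?G = "Gr b (eta b)" and ?G' = "Gr b (eta b / q)"
  have etab: "eta b \<noteq> 0" using eta b by auto
  have fG: "aux_mult N ?G (adj ?G') \<doteq> sc N dG"
    using fus_monoR[of N N q "eta b" eta b] q etab eta by (simp add: fus_def dG_def)
  have adj1: "adj (aux_mult N (aux_mult N ?L' (aux_scalar N V)) ?G') \<doteq> aux_mult N (adj ?G') (adj (aux_mult N ?L' (aux_scalar N V)))"
    by (rule adj_mult, rule acomm_alg[OF aalg_WL aalg_Gr]) (use b in auto)
  have adj2: "adj (aux_mult N ?L' (aux_scalar N V)) \<doteq> aux_mult N (adj (aux_scalar N V)) (adj ?L')"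
    by (rule adj_mult, rule acomm_alg[OF aalg_Lg aalg_scalar[of N "{}"]]) (use b in auto)
  have "aux_mult N (aux_mult N (aux_mult N ?L (aux_scalar N W)) ?G) (adj (aux_mult N (aux_mult N ?L' (aux_scalar N V)) ?G'))
     \<doteq> aux_mult N (aux_mult N (aux_mult N ?L (aux_scalar N W)) ?G) (aux_mult N (adj ?G') (aux_mult N (aux_scalar N (sadj V)) (adj ?L')))"
    by (intro aux_mult_cong2 aeq_trans[OF adj1] aux_mult_cong2 aeq_trans[OF adj2] aux_mult_cong1 adj_scalar)
  also have "\<dots> = aux_mult N (aux_mult N ?L (aux_scalar N W)) (aux_mult N (aux_mult N ?G (adj ?G')) (aux_mult N (aux_scalar N (sadj V)) (adj ?L')))"
    by (simp add: aux_mult_assoc)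
  also have "\<dots> \<doteq> aux_mult N (aux_mult N ?L (aux_scalar N W)) (aux_mult N (sc N dG) (aux_mult N (aux_scalar N (sadj V)) (adj ?L')))"
    by (intro aux_mult_cong2 aux_mult_cong1 fG)
  also have "\<dots> \<doteq> aux_mult N (aux_mult N ?L (aux_scalar N W)) (asmult dG (aux_mult N (aux_scalar N (sadj V)) (adj ?L')))"
    by (intro aux_mult_cong2 sc_asmult_left awf_mult awf_adj aalg_awf[OF aalg_Lg]) (use b in auto)
  also have "\<dots> = asmult dG (aux_mult N ?L (aux_mult N (aux_mult N (aux_scalar N W) (aux_scalar N (sadj V))) (adj ?L')))"
    by (simp add: aux_mult_asmult_right aux_mult_assoc)
  also have "\<dots> \<doteq> asmult dG (aux_mult N ?L (aux_mult N (aux_scalar N (m2 W (sadj V))) (adj ?L')))"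
    by (intro asmult_cong aux_mult_cong2 aux_mult_cong1 aux_mult_scalar)
  finally show ?thesis .
qed

lemma emb_prod:
  assumes b: "1 \<le> b" "b \<le> N"
  shows "op_mult N (emb N b (aux_mult N (aux_mult N (Lg b (eta b)) (aux_scalar N W)) (Gr b (eta b))))
           (emb N b (adj (aux_mult N (aux_mult N (Lg b (eta b / q)) (aux_scalar N V)) (Gr b (eta b / q)))))
       = op_smult (\<Prod>j=Suc b..N. delta q (eta b / eta j))
           (emb N b (aux_mult N (Lg b (eta b)) (aux_mult N (aux_scalar N (m2 W (sadj V))) (adj (Lg b (eta b / q))))))"
proof -
  have "aalg N ({1..b-1} \<union> {Suc b..N}) (adj (aux_mult N (aux_mult N (Lg b (eta b / q)) (aux_scalar N V)) (Gr b (eta b / q))))"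
    by (intro aalg_adj aalg_mult aalg_WL_b aalg_Gr_b b)
  then have "op_mult N (emb N b (aux_mult N (aux_mult N (Lg b (eta b)) (aux_scalar N W)) (Gr b (eta b))))
           (emb N b (adj (aux_mult N (aux_mult N (Lg b (eta b / q)) (aux_scalar N V)) (Gr b (eta b / q)))))
      = emb N b (aux_mult N (aux_mult N (aux_mult N (Lg b (eta b)) (aux_scalar N W)) (Gr b (eta b)))
           (adj (aux_mult N (aux_mult N (Lg b (eta b / q)) (aux_scalar N V)) (Gr b (eta b / q)))))"
    by (subst emb_mult) (use b in auto)
  also have "\<dots> = emb N b (asmult (\<Prod>j=Suc b..N. delta q (eta b / eta j))
           (aux_mult N (Lg b (eta b)) (aux_mult N (aux_scalar N (m2 W (sadj V))) (adj (Lg b (eta b / q))))))"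
    by (rule emb_cong[OF K[OF b]])
  finally show ?thesis by (simp add: emb_asmult)
qed

end


lemma op_mult_smult_both: "op_mult N (op_smult a A) (op_smult b B) = op_smult (a * b) (op_mult N A B)"
  by (simp add: op_mult_smult_left op_mult_smult_right op_smult_smult mult.commute)

lemma delta_one: "q \<noteq> 0 \<Longrightarrow> delta q 1 = - (cq q * cq q)"
  by (simp add: delta_def cq_def field_simps power2_eq_square)

lemma prod_split3:
  assumes "1 \<le> b" "b \<le> N"
  shows "(\<Prod>j=1..N. f j) = (\<Prod>j=1..b-1. f j) * f b * (\<Prod>j=Suc b..N. f j)"
proof -
  have d: "{1..N} = {1..b-1} \<union> insert b {Suc b..N}" using assms by auto
  have "(\<Prod>j\<in>{1..b-1} \<union> insert b {Suc b..N}. f j) = (\<Prod>j=1..b-1. f j) * (\<Prod>j\<in>insert b {Suc b..N}. f j)"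
    by (rule prod.union_disjoint) auto
  also have "(\<Prod>j\<in>insert b {Suc b..N}. f j) = f b * (\<Prod>j=Suc b..N. f j)" by simp
  finally show ?thesis unfolding d by (simp add: mult.assoc)
qed

context setting
begin

lemma LgS:
  assumes b: "1 \<le> b" "b \<le> N" and U: "\<And>x y. x < 2 \<Longrightarrow> y < 2 \<Longrightarrow> U x y = k * id2 x y"
  shows "aux_mult N (Lg b (eta b)) (aux_mult N (aux_scalar N U) (adj (Lg b (eta b / q))))
      \<doteq> sc N (k * (\<Prod>j=1..b-1. delta q (eta b / eta j)))"
proof -
  have etab: "eta b \<noteq> 0" using eta b by auto
  have fL: "aux_mult N (Lg b (eta b)) (adj (Lg b (eta b / q))) \<doteq> sc N (\<Prod>j=1..b-1. delta q (eta b / eta j))"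
    using fus_mono[of "b-1" N q "eta b" eta] q etab eta b by (simp add: fus_def)
  have "aux_mult N (Lg b (eta b)) (aux_mult N (aux_scalar N U) (adj (Lg b (eta b / q))))
      \<doteq> aux_mult N (Lg b (eta b)) (aux_mult N (sc N k) (adj (Lg b (eta b / q))))"
    unfolding sc_def by (intro aux_mult_cong2 aux_mult_cong1 aux_scalar_cong U)
  also have "\<dots> \<doteq> aux_mult N (Lg b (eta b)) (asmult k (adj (Lg b (eta b / q))))"
    by (intro aux_mult_cong2 sc_asmult_left awf_adj aalg_awf[OF aalg_Lg]) (use b in auto)
  also have "\<dots> = asmult k (aux_mult N (Lg b (eta b)) (adj (Lg b (eta b / q))))"
    by (simp add: aux_mult_asmult_right)
  also have "\<dots> \<doteq> asmult k (sc N (\<Prod>j=1..b-1. delta q (eta b / eta j)))"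
    by (rule asmult_cong[OF fL])
  finally show ?thesis by (simp add: asmult_sc)
qed

lemma T_eta:
  assumes b: "1 \<le> b" "b \<le> N"
  shows "T (eta b) = op_smult (cq q) (emb N b (aux_mult N (aux_mult N (Lg b (eta b)) (aux_scalar N sigx)) (Gr b (eta b))))"
  using Tbar_ptrace[OF awf_M] TW[OF b] by simp

lemma T_eta':
  assumes b: "1 \<le> b" "b \<le> N"
  shows "T (eta b / q) = op_smult (- cq q) (emb N b (adj (aux_mult N (aux_mult N (Lg b (eta b / q)) (aux_scalar N sigx)) (Gr b (eta b / q)))))"
  using Tbar_ptrace[OF awf_M] TW'[OF b] by simp

lemma TT:
  assumes b: "1 \<le> b" "b \<le> N"
  shows "op_mult N (T (eta b)) (T (eta b / q)) = op_smult (afun N q eta (eta b) * dfun N eta (eta b / q)) (op_id N)"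
proof -
  let ?dG = "\<Prod>j=Suc b..N. delta q (eta b / eta j)" and ?dL = "\<Prod>j=1..b-1. delta q (eta b / eta j)"
  have etab: "eta b \<noteq> 0" using eta b by auto
  have U: "m2 sigx (sadj sigx) x y = (-1) * id2 x y" if "x < 2" "y < 2" for x y
    using that by (auto simp: m2_def sadj_def sigx_def id2_def less2)
  have "op_mult N (T (eta b)) (T (eta b / q)) = op_smult (cq q * (- cq q))
     (op_smult ?dG (emb N b (aux_mult N (Lg b (eta b)) (aux_mult N (aux_scalar N (m2 sigx (sadj sigx))) (adj (Lg b (eta b / q)))))))"
    by (simp only: T_eta[OF b] T_eta'[OF b] op_mult_smult_both emb_prod[OF b])
  also have "\<dots> = op_smult (cq q * (- cq q)) (op_smult ?dG (emb N b (sc N (-1 * ?dL))))"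
    by (simp only: emb_cong[OF LgS[OF b U]])
  also have "\<dots> = op_smult ((cq q * cq q) * ?dG * ?dL) (op_id N)"
    by (simp add: emb_sc[OF b] op_smult_smult power2_eq_square algebra_simps)
  also have "(cq q * cq q) * ?dG * ?dL = afun N q eta (eta b) * dfun N eta (eta b / q)"
    using ad_prod[OF q etab eta] prod_split3[OF b, of "\<lambda>j. delta q (eta b / eta j)"] etab delta_one[OF q]
    by (simp add: algebra_simps)
  finally show ?thesis .
qed

lemma Y_eq:
  "ptrace (aux_mult N (aux_mult N (M l) (aux_scalar N X)) (aux_scalar N sigx)) = ptrace (aux_mult N (M l) (aux_scalar N (m2 X sigx)))"
  by (simp add: aux_mult_assoc ptrace_cong aux_mult_cong2 aux_mult_scalar)

definition Vz :: "smat \<Rightarrow> smat" where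
  "Vz X = (\<lambda>a b. sigz a a * sigz b b * m2 X sigx b a)"

lemma lemmaQ:
  assumes b: "1 \<le> b" "b \<le> N"
  shows "op_mult N (ptrace (aux_mult N (M (eta b)) (aux_scalar N (m2 X sigx)))) (T (eta b / q))
       = - op_mult N (T (eta b)) (ptrace (aux_mult N (M (eta b / q)) (aux_scalar N (Vz X))))"
proof -
  let ?dG = "\<Prod>j=Suc b..N. delta q (eta b / eta j)"
  let ?E = "\<lambda>U. emb N b (aux_mult N (Lg b (eta b)) (aux_mult N (aux_scalar N U) (adj (Lg b (eta b / q)))))"
  have e1: "aux_scalar N (m2 (m2 X sigx) (sadj sigx)) \<doteq> asmult (-1) (aux_scalar N X)"
    unfolding aux_scalar_neg[symmetric]
    by (rule aux_scalar_cong) (auto simp: m2_def sadj_def sigx_def less2)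
  have e2: "aux_scalar N (m2 sigx (sadj (Vz X))) \<doteq> aux_scalar N X"
    by (rule aux_scalar_cong) (auto simp: m2_def sadj_def sigx_def sigz_def Vz_def less2)
  have E1: "?E (m2 (m2 X sigx) (sadj sigx)) = op_smult (-1) (?E X)"
  proof -
    have "?E (m2 (m2 X sigx) (sadj sigx)) = emb N b (aux_mult N (Lg b (eta b)) (aux_mult N (asmult (-1) (aux_scalar N X)) (adj (Lg b (eta b / q)))))"
      by (intro emb_cong aux_mult_cong2 aux_mult_cong1 e1)
    then show ?thesis by (simp add: aux_mult_asmult_left aux_mult_asmult_right emb_asmult)
  qed
  have E2: "?E (m2 sigx (sadj (Vz X))) = ?E X"
    by (intro emb_cong aux_mult_cong2 aux_mult_cong1 e2)
  have "op_mult N (ptrace (aux_mult N (M (eta b)) (aux_scalar N (m2 X sigx)))) (T (eta b / q))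
      = op_smult (cq q * (- cq q)) (op_smult ?dG (?E (m2 (m2 X sigx) (sadj sigx))))"
    by (simp only: TW[OF b] T_eta'[OF b] op_mult_smult_both emb_prod[OF b])
  moreover have "op_mult N (T (eta b)) (ptrace (aux_mult N (M (eta b / q)) (aux_scalar N (Vz X))))
      = op_smult (cq q * (- cq q)) (op_smult ?dG (?E (m2 sigx (sadj (Vz X)))))"
    by (simp only: TW'[OF b] T_eta[OF b] op_mult_smult_both emb_prod[OF b] mult.commute)
  ultimately show ?thesis using E1 E2
    by (simp add: op_smult_smult fun_eq_iff op_smult_def)
qed

end


section \<open>RTT relation\<close>

lemma sum_2: "(\<Sum>b<(2::nat). f b) = f 0 + f 1"
  by (simp add: numeral_2_eq_2)

definition rtt :: "nat \<Rightarrow> complex \<Rightarrow> complex \<Rightarrow> aop \<Rightarrow> aop \<Rightarrow> bool" where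
  "rtt N q x P Q \<longleftrightarrow> (\<forall>a<2. \<forall>a'<2. \<forall>e<2. \<forall>e'<2.
     (\<Sum>b<2. \<Sum>b'<2. op_smult (rr q x a a' b b') (op_mult N (P b e) (Q b' e')))
   = (\<Sum>b<2. \<Sum>b'<2. op_smult (rr q x b b' e e') (op_mult N (Q a' b') (P a b))))"

lemma loc_sum: "(\<Sum>x\<in>S. loc N n (F x)) = loc N n (\<lambda>i j. \<Sum>x\<in>S. F x i j)"
  by (intro ext) (simp add: sum_cop_apply loc_def if_distrib cong: if_cong)

lemma rtt_cong: "rtt N q x P Q \<Longrightarrow> P \<doteq> P' \<Longrightarrow> Q \<doteq> Q' \<Longrightarrow> rtt N q x P' Q'"
  unfolding rtt_def aeq_def by (simp add: sum_2)

lemma rtt_lax: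
  assumes n: "1 \<le> n" "n \<le> N" and q: "q \<noteq> 0" and u: "u \<noteq> 0" and v: "v \<noteq> 0"
  shows "rtt N q (u / v) (lax N q n u) (lax N q n v)"
proof -
  have "rtt N q (u / v) (la N n (lm q u)) (la N n (lm q v))"
    unfolding rtt_def
  proof (intro allI impI)
    fix a a' e e' :: nat assume h: "a < 2" "a' < 2" "e < 2" "e' < 2"
    have L: "(\<Sum>b<2. \<Sum>b'<2. op_smult (rr q (u/v) a a' b b') (op_mult N (la N n (lm q u) b e) (la N n (lm q v) b' e')))
      = loc N n (\<lambda>i j. \<Sum>b<2. \<Sum>b'<2. rr q (u / v) a a' b b' * m2 (lm q u b e) (lm q v b' e') i j)"
      by (simp add: la_def loc_mult_same[OF n] loc_smult[symmetric] loc_sum)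
    have R: "(\<Sum>b<2. \<Sum>b'<2. op_smult (rr q (u/v) b b' e e') (op_mult N (la N n (lm q v) a' b') (la N n (lm q u) a b)))
      = loc N n (\<lambda>i j. \<Sum>b<2. \<Sum>b'<2. rr q (u / v) b b' e e' * m2 (lm q v a' b') (lm q u a b) i j)"
      by (simp add: la_def loc_mult_same[OF n] loc_smult[symmetric] loc_sum)
    show "(\<Sum>b<2. \<Sum>b'<2. op_smult (rr q (u/v) a a' b b') (op_mult N (la N n (lm q u) b e) (la N n (lm q v) b' e')))
      = (\<Sum>b<2. \<Sum>b'<2. op_smult (rr q (u/v) b b' e e') (op_mult N (la N n (lm q v) a' b') (la N n (lm q u) a b)))"
      unfolding L R by (rule loc_cong[OF n]) (rule rtt_local[OF q u v h])
  qed
  then show ?thesis by (rule rtt_cong) (use lax_la[OF n] aeq_sym in blast)+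
qed

lemma rtt_mult:
  assumes PQ: "rtt N q x P Q" and PQ': "rtt N q x P' Q'"
    and c1: "acomm N P' Q" and c2: "acomm N P Q'"
  shows "rtt N q x (aux_mult N P P') (aux_mult N Q Q')"
  unfolding rtt_def
proof (intro allI impI)
  fix a a' e e' :: nat assume h: "a < 2" "a' < 2" "e < 2" "e' < 2"
  let ?r = "rr q x"
  have C1: "op_mult N (P' i j) (Q k l) = op_mult N (Q k l) (P' i j)" if "i < 2" "j < 2" "k < 2" "l < 2" for i j k l
    using c1 that by (simp add: acomm_def)
  have C1': "op_mult N (P' i j) (op_mult N (Q k l) Z) = op_mult N (Q k l) (op_mult N (P' i j) Z)" if "i < 2" "j < 2" "k < 2" "l < 2" for i j k l Z
    using C1[OF that] by (metis op_mult_assoc)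
  have C2: "op_mult N (P i j) (Q' k l) = op_mult N (Q' k l) (P i j)" if "i < 2" "j < 2" "k < 2" "l < 2" for i j k l
    using c2 that by (simp add: acomm_def)
  have C2': "op_mult N (P i j) (op_mult N (Q' k l) Z) = op_mult N (Q' k l) (op_mult N (P i j) Z)" if "i < 2" "j < 2" "k < 2" "l < 2" for i j k l Z
    using C2[OF that] by (metis op_mult_assoc)
  have rPQ: "(\<Sum>b<2. \<Sum>b'<2. op_smult (?r a a' b b') (op_mult N (P b f) (Q b' f')))
      = (\<Sum>b<2. \<Sum>b'<2. op_smult (?r b b' f f') (op_mult N (Q a' b') (P a b)))" if "f < 2" "f' < 2" for f f'
    using PQ h that by (simp add: rtt_def)
  have rPQ': "(\<Sum>f<2. \<Sum>f'<2. op_smult (?r b b' f f') (op_mult N (P' f e) (Q' f' e')))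
      = (\<Sum>d<2. \<Sum>d'<2. op_smult (?r d d' e e') (op_mult N (Q' b' d') (P' b d)))" if "b < 2" "b' < 2" for b b'
    using PQ' h that by (simp add: rtt_def)
  have "(\<Sum>b<2. \<Sum>b'<2. op_smult (?r a a' b b') (op_mult N (aux_mult N P P' b e) (aux_mult N Q Q' b' e')))
     = (\<Sum>f<2. \<Sum>f'<2. op_mult N (\<Sum>b<2. \<Sum>b'<2. op_smult (?r a a' b b') (op_mult N (P b f) (Q b' f'))) (op_mult N (P' f e) (Q' f' e')))"
    using h by (simp add: sum_2 aux_mult_eq op_mult_add_left op_mult_add_right op_mult_smult_left op_mult_smult_right
        op_smult_add op_mult_assoc C1 C1' add_ac del: plus_fun_apply)
  also have "\<dots> = (\<Sum>f<2. \<Sum>f'<2. op_mult N (\<Sum>b<2. \<Sum>b'<2. op_smult (?r b b' f f') (op_mult N (Q a' b') (P a b))) (op_mult N (P' f e) (Q' f' e')))"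
    by (intro sum.cong refl) (simp add: rPQ)
  also have "\<dots> = (\<Sum>b<2. \<Sum>b'<2. op_mult N (op_mult N (Q a' b') (P a b)) (\<Sum>f<2. \<Sum>f'<2. op_smult (?r b b' f f') (op_mult N (P' f e) (Q' f' e'))))"
    by (simp add: sum_2 op_mult_add_left op_mult_add_right op_mult_smult_left op_mult_smult_right
        op_smult_add op_mult_assoc add_ac del: plus_fun_apply)
  also have "\<dots> = (\<Sum>b<2. \<Sum>b'<2. op_mult N (op_mult N (Q a' b') (P a b)) (\<Sum>d<2. \<Sum>d'<2. op_smult (?r d d' e e') (op_mult N (Q' b' d') (P' b d))))"
    by (intro sum.cong refl) (simp add: rPQ')
  also have "\<dots> = (\<Sum>d<2. \<Sum>d'<2. op_smult (?r d d' e e') (op_mult N (aux_mult N Q Q' a' d') (aux_mult N P P' a d)))"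
    using h by (simp add: sum_2 aux_mult_eq op_mult_add_left op_mult_add_right op_mult_smult_left op_mult_smult_right
        op_smult_add op_mult_assoc C2 C2' add_ac del: plus_fun_apply)
  finally show "(\<Sum>b<2. \<Sum>b'<2. op_smult (?r a a' b b') (op_mult N (aux_mult N P P' b e) (aux_mult N Q Q' b' e')))
     = (\<Sum>b<2. \<Sum>b'<2. op_smult (?r b b' e e') (op_mult N (aux_mult N Q Q' a' b') (aux_mult N P P' a b)))" .
qed


lemma rtt_Id: "rtt N q x (Id N) (Id N)"
  unfolding rtt_def
  by (auto simp: sum_2 Id_def aux_scalar_def id2_def less2 op_mult_smult_left op_mult_smult_right op_id_left
      op_smult_smult mult.commute)

lemma rtt_mono:
  assumes k: "k \<le> N" and q: "q \<noteq> 0" and l: "l \<noteq> 0" and m: "m \<noteq> 0" and eta: "\<forall>j\<in>{1..N}. eta j \<noteq> 0"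
  shows "rtt N q (l / m) (mono N q eta k l) (mono N q eta k m)"
  using k
proof (induction k)
  case 0 then show ?case using rtt_Id by (simp add: Id_def)
next
  case (Suc k)
  have e: "eta (Suc k) \<noteq> 0" using eta Suc.prems by auto
  have r1: "rtt N q (l / m) (lax N q (Suc k) (l / eta (Suc k))) (lax N q (Suc k) (m / eta (Suc k)))"
    using rtt_lax[of "Suc k" N q "l / eta (Suc k)" "m / eta (Suc k)"] Suc.prems q l m e by simp
  have c1: "acomm N (mono N q eta k l) (lax N q (Suc k) (m / eta (Suc k)))"
    by (rule acomm_alg[OF aalg_monodr aalg_lax]) (use Suc.prems in auto)
  have c2: "acomm N (lax N q (Suc k) (l / eta (Suc k))) (mono N q eta k m)"
    using acomm_alg[OF aalg_monodr[of k N q eta m] aalg_lax[of "Suc k" N q "l / eta (Suc k)"]] Suc.prems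
    by (auto simp: acomm_def)
  show ?case using rtt_mult[OF r1 Suc.IH c1 c2] Suc.prems by simp
qed

lemma comm_rtt:
  assumes r: "rtt N q x P Q"
    and al: "x * q - inverse (q * x) \<noteq> 0" and be: "(x - inverse x) * (x - inverse x) \<noteq> (q - inverse q) * (q - inverse q)"
  shows "op_mult N (P 0 1 + P 1 0) (Q 0 1 + Q 1 0) = op_mult N (Q 0 1 + Q 1 0) (P 0 1 + P 1 0)"
proof (intro ext)
  fix i j
  let ?\<alpha> = "x * q - inverse (q * x)" and ?\<beta> = "x - inverse x" and ?\<gamma> = "q - inverse q"
  have E: "\<And>a a' e e'. a < 2 \<Longrightarrow> a' < 2 \<Longrightarrow> e < 2 \<Longrightarrow> e' < 2 \<Longrightarrow>
     (\<Sum>b<2. \<Sum>b'<2. op_smult (rr q x a a' b b') (op_mult N (P b e) (Q b' e'))) i j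
   = (\<Sum>b<2. \<Sum>b'<2. op_smult (rr q x b b' e e') (op_mult N (Q a' b') (P a b))) i j"
    using r unfolding rtt_def by simp
  note E' = E[simplified sum_2 rr_def lm_def op_smult_def plus_fun_apply, simplified]
  have h1: "?\<alpha> * op_mult N (P 0 1) (Q 0 1) i j = ?\<alpha> * op_mult N (Q 0 1) (P 0 1) i j"
    using E'[of 0 0 1 1] by simp
  have h2: "?\<alpha> * op_mult N (P 1 0) (Q 1 0) i j = ?\<alpha> * op_mult N (Q 1 0) (P 1 0) i j"
    using E'[of 1 1 0 0] by (simp add: algebra_simps)
  have h3: "?\<beta> * op_mult N (P 0 0) (Q 1 1) i j + ?\<gamma> * op_mult N (P 1 0) (Q 0 1) i j
      = ?\<beta> * op_mult N (Q 1 1) (P 0 0) i j + ?\<gamma> * op_mult N (Q 1 0) (P 0 1) i j"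
    using E'[of 0 1 0 1] by (simp add: algebra_simps)
  have h4: "?\<beta> * op_mult N (P 1 1) (Q 0 0) i j + ?\<gamma> * op_mult N (P 0 1) (Q 1 0) i j
      = ?\<beta> * op_mult N (Q 0 0) (P 1 1) i j + ?\<gamma> * op_mult N (Q 0 1) (P 1 0) i j"
    using E'[of 1 0 1 0] by (simp add: algebra_simps)
  have h5: "?\<beta> * op_mult N (P 0 1) (Q 1 0) i j + ?\<gamma> * op_mult N (P 1 1) (Q 0 0) i j
      = ?\<beta> * op_mult N (Q 1 0) (P 0 1) i j + ?\<gamma> * op_mult N (Q 1 1) (P 0 0) i j"
    using E'[of 0 1 1 0] by (simp add: algebra_simps)
  have h6: "?\<beta> * op_mult N (P 1 0) (Q 0 1) i j + ?\<gamma> * op_mult N (P 0 0) (Q 1 1) i j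
      = ?\<beta> * op_mult N (Q 0 1) (P 1 0) i j + ?\<gamma> * op_mult N (Q 0 0) (P 1 1) i j"
    using E'[of 1 0 0 1] by (simp add: algebra_simps)
  have d1: "op_mult N (P 0 1) (Q 0 1) i j = op_mult N (Q 0 1) (P 0 1) i j" using h1 al by simp
  have d2: "op_mult N (P 1 0) (Q 1 0) i j = op_mult N (Q 1 0) (P 1 0) i j" using h2 al by simp
  have "(?\<beta> * ?\<beta> - ?\<gamma> * ?\<gamma>) * (op_mult N (P 0 1) (Q 1 0) i j + op_mult N (P 1 0) (Q 0 1) i j
       - op_mult N (Q 1 0) (P 0 1) i j - op_mult N (Q 0 1) (P 1 0) i j) = 0"
    using h3 h4 h5 h6 by algebra
  moreover have "?\<beta> * ?\<beta> - ?\<gamma> * ?\<gamma> \<noteq> 0" using be by simp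
  ultimately have "op_mult N (P 0 1) (Q 1 0) i j + op_mult N (P 1 0) (Q 0 1) i j
       - op_mult N (Q 1 0) (P 0 1) i j - op_mult N (Q 0 1) (P 1 0) i j = 0"
    by simp
  then have d3: "op_mult N (P 0 1) (Q 1 0) i j + op_mult N (P 1 0) (Q 0 1) i j
       = op_mult N (Q 1 0) (P 0 1) i j + op_mult N (Q 0 1) (P 1 0) i j"
    by (simp add: algebra_simps)
  show "op_mult N (P 0 1 + P 1 0) (Q 0 1 + Q 1 0) i j = op_mult N (Q 0 1 + Q 1 0) (P 0 1 + P 1 0) i j"
    using d1 d2 d3 by (simp add: op_mult_add_left op_mult_add_right del: plus_fun_apply) (simp add: algebra_simps)
qed


lemma loc_decomp:
  assumes b: "1 \<le> b" "b \<le> N"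
  shows "loc N b X = op_smult (X 0 0) (loc N b (Em 0 0)) + op_smult (X 0 1) (loc N b (Em 0 1))
     + op_smult (X 1 0) (loc N b (Em 1 0)) + op_smult (X 1 1) (loc N b (Em 1 1))"
proof -
  have "loc N b X = loc N b (\<lambda>x y. X 0 0 * Em 0 0 x y + X 0 1 * Em 0 1 x y + X 1 0 * Em 1 0 x y + X 1 1 * Em 1 1 x y)"
    by (rule loc_cong[OF b]) (auto simp: Em_def less2)
  also have "\<dots> = op_smult (X 0 0) (loc N b (Em 0 0)) + op_smult (X 0 1) (loc N b (Em 0 1))
     + op_smult (X 1 0) (loc N b (Em 1 0)) + op_smult (X 1 1) (loc N b (Em 1 1))"
    by (simp only: loc_add loc_smult)
  finally show ?thesis .
qed

lemma emb_la_swap: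
  assumes b: "1 \<le> b" "b \<le> N" and k: "1 \<le> k" "k \<le> N" and bk: "b \<noteq> k"
    and sym: "\<And>i j x y. i < 2 \<Longrightarrow> j < 2 \<Longrightarrow> x < 2 \<Longrightarrow> y < 2 \<Longrightarrow> F i j x y = F x y i j"
  shows "emb N k (la N b F) = emb N b (la N k F)"
proof -
  have cm: "op_mult N (loc N k X) (loc N b Y) = op_mult N (loc N b Y) (loc N k X)" for X Y
    using loc_comm[OF b k bk[symmetric]] by simp
  have s: "F 0 (Suc 0) 0 0 = F 0 0 0 (Suc 0)" "F (Suc 0) 0 0 0 = F 0 0 (Suc 0) 0" "F (Suc 0) (Suc 0) 0 0 = F 0 0 (Suc 0) (Suc 0)"
    "F (Suc 0) 0 0 (Suc 0) = F 0 (Suc 0) (Suc 0) 0" "F (Suc 0) (Suc 0) 0 (Suc 0) = F 0 (Suc 0) (Suc 0) (Suc 0)"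
    "F (Suc 0) (Suc 0) (Suc 0) 0 = F (Suc 0) 0 (Suc 0) (Suc 0)"
    by (auto intro: sym)
  show ?thesis
    unfolding emb_def la_def
    by (simp add: loc_decomp[OF b, of "F _ _"] loc_decomp[OF k, of "F _ _"] op_mult_add_left op_mult_add_right
        op_mult_smult_left op_mult_smult_right cm s add_ac del: plus_fun_apply)
qed

lemma emb_lax_swap:
  assumes b: "1 \<le> b" "b \<le> N" and k: "1 \<le> k" "k \<le> N" and bk: "b \<noteq> k"
  shows "emb N k (lax N q b y) = emb N b (lax N q k y)"
proof -
  have "emb N k (lax N q b y) = emb N k (la N b (lm q y))" by (rule emb_cong[OF lax_la[OF b]])
  also have "\<dots> = emb N b (la N k (lm q y))" by (rule emb_la_swap[OF b k bk swap_local])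
  also have "\<dots> = emb N b (lax N q k y)" by (rule emb_cong[OF aeq_sym[OF lax_la[OF k]]])
  finally show ?thesis .
qed

lemma emb_unit:
  assumes b: "1 \<le> b" "b \<le> N" and k: "1 \<le> k" "k \<le> N" and bk: "b \<noteq> k" and q: "q \<noteq> 0" and x: "x \<noteq> 0"
  shows "op_mult N (emb N b (lax N q k x)) (emb N k (lax N q b (inverse x))) = op_smult (rho q x) (op_id N)"
proof -
  have "op_mult N (emb N b (lax N q k x)) (emb N k (lax N q b (inverse x)))
      = op_mult N (emb N b (lax N q k x)) (emb N b (lax N q k (inverse x)))"
    by (simp add: emb_lax_swap[OF b k bk])
  also have "\<dots> = emb N b (aux_mult N (lax N q k x) (lax N q k (inverse x)))"
    by (rule emb_mult[symmetric, OF aalg_lax[OF k]]) (use b bk in auto)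
  also have "\<dots> = emb N b (la N k (lmul (lm q x) (lm q (inverse x))))"
    by (rule emb_cong) (simp add: la_mult[OF k, symmetric] aux_mult_cong lax_la[OF k])
  also have "\<dots> = emb N b (sc N (rho q x))"
    by (rule emb_cong) (meson aeq_sym aeq_trans la_leq[OF k unit_local[OF q x]] sc_la[OF k])
  finally show ?thesis by (simp add: emb_sc[OF b])
qed

context setting
begin

lemma factor_nz:
  assumes H: "afun N q eta (eta b) * dfun N eta (eta b / q) \<noteq> 0" and c: "c \<in> {1..N}"
  shows "eta b * q / eta c - eta c / (eta b * q) \<noteq> 0" "eta b / q / eta c - eta c / (eta b / q) \<noteq> 0"
proof -
  have a: "(\<Prod>n=1..N. eta b * q / eta n - eta n / (eta b * q)) \<noteq> 0" using H by (auto simp: afun_def)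
  have d: "(\<Prod>n=1..N. eta b / q / eta n - eta n / (eta b / q)) \<noteq> 0" using H by (auto simp: dfun_def)
  show "eta b * q / eta c - eta c / (eta b * q) \<noteq> 0" using a c by (auto simp: prod_zero_iff)
  show "eta b / q / eta c - eta c / (eta b / q) \<noteq> 0" using d c by (auto simp: prod_zero_iff)
qed

lemma T_comm:
  assumes H: "afun N q eta (eta b) * dfun N eta (eta b / q) \<noteq> 0" and b: "b \<in> {1..N}" and c: "c \<in> {1..N}"
  shows "op_mult N (T (eta b)) (T (eta c)) = op_mult N (T (eta c)) (T (eta b))"
proof (cases "b = c")
  case True then show ?thesis by simp
next
  case False
  have eb: "eta b \<noteq> 0" and ec: "eta c \<noteq> 0" using eta b c by auto
  let ?x = "eta b / eta c"
  have f1: "eta b * q / eta c - eta c / (eta b * q) \<noteq> 0" and f2: "eta b / q / eta c - eta c / (eta b / q) \<noteq> 0"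
    using factor_nz[OF H c] by auto
  have al: "?x * q - inverse (q * ?x) \<noteq> 0"
    using f1 eb ec q by (simp add: field_simps)
  have be: "(?x - inverse ?x) * (?x - inverse ?x) - (q - inverse q) * (q - inverse q)
      = (eta b * q / eta c - eta c / (eta b * q)) * (eta b / q / eta c - eta c / (eta b / q))"
    using eb ec q by (simp add: field_simps)
  then have be': "(?x - inverse ?x) * (?x - inverse ?x) \<noteq> (q - inverse q) * (q - inverse q)"
    using f1 f2 by auto
  have r: "rtt N q ?x (M (eta b)) (M (eta c))"
    unfolding monodromy_def by (rule rtt_mono[OF le_refl q eb ec eta])
  show ?thesis
    using comm_rtt[OF r al be'] by (simp add: Tbar_def opB_def opC_def op_add_eq)
qed

end


lemma wf_op_prod: "(\<And>x. x \<in> set xs \<Longrightarrow> wf N x) \<Longrightarrow> wf N (op_prod N xs)"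
  by (induction xs) (auto simp: op_prod_def)

lemma alg_op_prod: "(\<And>x. x \<in> set xs \<Longrightarrow> x \<in> alg N S) \<Longrightarrow> op_prod N xs \<in> alg N S"
  by (induction xs) (auto simp: op_prod_def intro: alg.intros)

lemma op_prod_append: "(\<And>x. x \<in> set ys \<Longrightarrow> wf N x) \<Longrightarrow> op_prod N (xs @ ys) = op_mult N (op_prod N xs) (op_prod N ys)"
  by (induction xs) (auto simp: op_prod_def op_id_left wf_op_prod[unfolded op_prod_def] op_mult_assoc)

lemma op_prod_single: "wf N x \<Longrightarrow> op_prod N [x] = x"
  by (simp add: op_prod_def op_id_right)

lemma op_prod_snoc: "(\<And>x. x \<in> set xs \<Longrightarrow> wf N x) \<Longrightarrow> wf N y \<Longrightarrow> op_prod N (xs @ [y]) = op_mult N (op_prod N xs) y"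
  by (subst op_prod_append) (auto simp: op_prod_single)

lemma upt_Suc_snoc: "[1..<Suc (Suc j)] = [1..<Suc j] @ [Suc j]" by simp

context setting
begin

definition E :: "nat \<Rightarrow> nat \<Rightarrow> cop" where "E b k = emb N b (lax N q k (eta b / eta k))"
definition Rg :: "nat \<Rightarrow> nat \<Rightarrow> cop" where "Rg b m = emb N b (monoR N q eta m N (eta b))"
definition Lw :: "nat \<Rightarrow> nat \<Rightarrow> cop" where "Lw b j = emb N b (mono N q eta j (eta b))"

lemma E_alg: "1 \<le> b \<Longrightarrow> b \<le> N \<Longrightarrow> 1 \<le> k \<Longrightarrow> k \<le> N \<Longrightarrow> E b k \<in> alg N {b, k}"
  unfolding E_def using emb_alg[OF aalg_lax[of k N q], of b] by simp

lemma Rg_alg: "1 \<le> b \<Longrightarrow> b \<le> N \<Longrightarrow> Rg b m \<in> alg N (insert b {Suc m..N})"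
  unfolding Rg_def by (rule emb_alg[OF aalg_monoR]) auto

lemma Lw_alg: "1 \<le> b \<Longrightarrow> b \<le> N \<Longrightarrow> j \<le> N \<Longrightarrow> Lw b j \<in> alg N (insert b {1..j})"
  unfolding Lw_def by (rule emb_alg[OF aalg_monodr]) auto

lemma Lw_0: "1 \<le> b \<Longrightarrow> b \<le> N \<Longrightarrow> Lw b 0 = op_id N"
  by (simp add: Lw_def emb_scalar loc_id)

lemma Lw_Suc: "1 \<le> b \<Longrightarrow> b \<le> N \<Longrightarrow> j < b \<Longrightarrow> Suc j \<le> N \<Longrightarrow> Lw b (Suc j) = op_mult N (E b (Suc j)) (Lw b j)"
  unfolding Lw_def E_def
  by (simp, rule emb_mult[OF aalg_monodr[of j N q eta]]) auto

lemma monoR_le: "k \<le> m \<Longrightarrow> monoR N q eta m k l = Id N"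
  by (cases k) auto

lemma monoR_split: "m < k \<Longrightarrow> k \<le> N \<Longrightarrow> monoR N q eta m k l \<doteq> aux_mult N (monoR N q eta (Suc m) k l) (lax N q (Suc m) (l / eta (Suc m)))"
proof (induction k)
  case 0 then show ?case by simp
next
  case (Suc k)
  show ?case
  proof (cases "k = m")
    case True
    have a: "awf N (lax N q (Suc m) (l / eta (Suc m)))"
      by (rule aalg_awf[OF aalg_lax]) (use Suc.prems True in auto)
    have i1: "monoR N q eta m m l = Id N" by (rule monoR_le) simp
    have i2: "monoR N q eta (Suc m) (Suc m) l = Id N" by simp
    show ?thesis using True i1 i2 aeq_trans[OF aux_mult_Id_right[OF a] aeq_sym[OF aux_mult_Id_left[OF a]]]
      by simp
  next
    case False
    then have "monoR N q eta m k l \<doteq> aux_mult N (monoR N q eta (Suc m) k l) (lax N q (Suc m) (l / eta (Suc m)))"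
      using Suc by simp
    then have "aux_mult N (lax N q (Suc k) (l / eta (Suc k))) (monoR N q eta m k l)
        \<doteq> aux_mult N (lax N q (Suc k) (l / eta (Suc k))) (aux_mult N (monoR N q eta (Suc m) k l) (lax N q (Suc m) (l / eta (Suc m))))"
      by (rule aux_mult_cong2)
    then show ?thesis using Suc.prems False
      by (simp add: aux_mult_assoc)
  qed
qed

lemma Rg_Suc: "1 \<le> b \<Longrightarrow> b \<le> m \<Longrightarrow> m < N \<Longrightarrow> Rg b m = op_mult N (Rg b (Suc m)) (E b (Suc m))"
proof -
  assume h: "1 \<le> b" "b \<le> m" "m < N"
  have "Rg b m = emb N b (aux_mult N (monoR N q eta (Suc m) N (eta b)) (lax N q (Suc m) (eta b / eta (Suc m))))"
    unfolding Rg_def by (rule emb_cong[OF monoR_split]) (use h in auto)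
  also have "\<dots> = op_mult N (Rg b (Suc m)) (E b (Suc m))"
    unfolding Rg_def E_def by (rule emb_mult[OF aalg_lax]) (use h in auto)
  finally show ?thesis .
qed

lemma Rg_N: "1 \<le> b \<Longrightarrow> b \<le> N \<Longrightarrow> Rg b N = op_id N"
proof -
  assume b: "1 \<le> b" "b \<le> N"
  have "monoR N q eta N N l = Id N" for l by (rule monoR_le) simp
  then show ?thesis using b by (simp add: Rg_def Id_def emb_scalar loc_id)
qed

lemma E_unit: "1 \<le> b \<Longrightarrow> b \<le> N \<Longrightarrow> 1 \<le> k \<Longrightarrow> k \<le> N \<Longrightarrow> b \<noteq> k \<Longrightarrow>
    op_mult N (E b k) (E k b) = op_smult (rho q (eta b / eta k)) (op_id N)"
proof -
  assume h: "1 \<le> b" "b \<le> N" "1 \<le> k" "k \<le> N" "b \<noteq> k"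
  then have e: "eta b \<noteq> 0" "eta k \<noteq> 0" using eta by auto
  then have "eta k / eta b = inverse (eta b / eta k)" by simp
  then show ?thesis unfolding E_def using emb_unit[OF h q, of "eta b / eta k"] e by simp
qed

lemma wf_E: "1 \<le> b \<Longrightarrow> b \<le> N \<Longrightarrow> 1 \<le> k \<Longrightarrow> k \<le> N \<Longrightarrow> wf N (E b k)"
  by (rule alg_wf[OF E_alg])
lemma wf_Rg: "1 \<le> b \<Longrightarrow> b \<le> N \<Longrightarrow> wf N (Rg b k)"
  by (rule alg_wf[OF Rg_alg])
lemma wf_Lw: "1 \<le> b \<Longrightarrow> b \<le> N \<Longrightarrow> k \<le> N \<Longrightarrow> wf N (Lw b k)"
  by (rule alg_wf[OF Lw_alg])

lemma Y_form:
  assumes b: "1 \<le> b" "b \<le> N"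
  shows "ptrace (aux_mult N (M (eta b)) (aux_scalar N W)) = op_smult (cq q) (op_mult N (op_mult N (Lw b (b - 1)) (loc N b W)) (Rg b b))"
proof -
  have "emb N b (aux_mult N (aux_mult N (Lg b (eta b)) (aux_scalar N W)) (Gr b (eta b)))
     = op_mult N (emb N b (aux_mult N (Lg b (eta b)) (aux_scalar N W))) (emb N b (Gr b (eta b)))"
    by (rule emb_mult[OF aalg_Gr]) (use b in auto)
  also have "emb N b (aux_mult N (Lg b (eta b)) (aux_scalar N W)) = op_mult N (emb N b (Lg b (eta b))) (emb N b (aux_scalar N W))"
    by (rule emb_mult[OF aalg_scalar[of N "{}"]]) (use b in auto)
  finally show ?thesis using TW[OF b] by (simp add: Lw_def Rg_def emb_scalar[OF b])
qed

lemma T_form: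
  assumes b: "1 \<le> b" "b \<le> N"
  shows "T (eta b) = op_smult (cq q) (op_mult N (op_mult N (Lw b (b - 1)) (loc N b sigx)) (Rg b b))"
  using Tbar_ptrace[OF awf_M] Y_form[OF b] by simp

end


context setting
begin

definition RP :: "nat \<Rightarrow> nat \<Rightarrow> cop" where "RP m j = op_prod N (map (\<lambda>b. Rg b m) [1..<Suc j])"
definition SX :: "nat \<Rightarrow> cop" where "SX j = op_prod N (map (\<lambda>b. loc N b sigx) [1..<Suc j])"
definition Gp :: "nat \<Rightarrow> cop" where "Gp j = op_prod N (map (\<lambda>b. T (eta b)) [1..<Suc j])"
definition KK :: "nat \<Rightarrow> complex" where
  "KK j = cq q ^ j * (\<Prod>k=1..j. \<Prod>b=1..k-1. rho q (eta b / eta k))"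

lemma KK_Suc: "KK (Suc m) = KK m * cq q * (\<Prod>b=1..m. rho q (eta b / eta (Suc m)))"
  by (simp add: KK_def prod.nat_ivl_Suc' mult_ac)

lemma RP_alg: "j \<le> N \<Longrightarrow> RP m j \<in> alg N ({1..j} \<union> {Suc m..N})"
  unfolding RP_def by (rule alg_op_prod) (auto intro: alg_mono[OF Rg_alg])

lemma wf_RP: "j \<le> N \<Longrightarrow> wf N (RP m j)"
  by (rule alg_wf[OF RP_alg])

lemma wf_SX: "j \<le> N \<Longrightarrow> wf N (SX j)"
  unfolding SX_def by (rule wf_op_prod) auto

lemma SX_alg: "j \<le> N \<Longrightarrow> SX j \<in> alg N {1..j}"
  unfolding SX_def by (rule alg_op_prod) (auto intro: alg_loc)

lemma wf_T: "wf N (T l)"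
  using awf_M[of l] by (simp add: Tbar_def opB_def opC_def op_add_eq awf_def)

lemma RP_snoc: "Suc j \<le> N \<Longrightarrow> RP m (Suc j) = op_mult N (RP m j) (Rg (Suc j) m)"
  unfolding RP_def upt_Suc_snoc by (simp only: map_append list.map) (rule op_prod_snoc, auto intro: wf_Rg)

lemma SX_snoc: "Suc j \<le> N \<Longrightarrow> SX (Suc j) = op_mult N (SX j) (loc N (Suc j) sigx)"
  unfolding SX_def upt_Suc_snoc by (simp only: map_append list.map) (rule op_prod_snoc, auto)

lemma Gp_snoc: "Gp (Suc j) = op_mult N (Gp j) (T (eta (Suc j)))"
  unfolding Gp_def upt_Suc_snoc by (simp only: map_append list.map) (rule op_prod_snoc, auto intro: wf_T)

lemma lemI:
  assumes "j \<le> m" "m < N"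
  shows "op_mult N (RP m j) (Lw (Suc m) j) = op_smult (\<Prod>b=1..j. rho q (eta b / eta (Suc m))) (RP (Suc m) j)"
  using assms
proof (induction j)
  case 0
  then show ?case by (simp add: RP_def op_prod_def Lw_0 op_id_left)
next
  case (Suc j)
  let ?\<rho> = "rho q (eta (Suc j) / eta (Suc m))" and ?\<rho>j = "\<Prod>b=1..j. rho q (eta b / eta (Suc m))"
  have h: "Suc j \<le> m" "m < N" using Suc.prems by auto
  have c: "op_mult N (Rg (Suc j) (Suc m)) (Lw (Suc m) j) = op_mult N (Lw (Suc m) j) (Rg (Suc j) (Suc m))"
    by (rule alg_comm[OF Lw_alg Rg_alg]) (use h in auto)
  have "op_mult N (RP m (Suc j)) (Lw (Suc m) (Suc j))
     = op_mult N (op_mult N (RP m j) (op_mult N (Rg (Suc j) (Suc m)) (E (Suc j) (Suc m)))) (op_mult N (E (Suc m) (Suc j)) (Lw (Suc m) j))"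
    using h by (simp add: RP_snoc Rg_Suc Lw_Suc)
  also have "\<dots> = op_mult N (RP m j) (op_mult N (Rg (Suc j) (Suc m)) (op_mult N (op_mult N (E (Suc j) (Suc m)) (E (Suc m) (Suc j))) (Lw (Suc m) j)))"
    by (simp add: op_mult_assoc)
  also have "\<dots> = op_smult ?\<rho> (op_mult N (RP m j) (op_mult N (Rg (Suc j) (Suc m)) (Lw (Suc m) j)))"
    using h by (simp add: E_unit op_mult_id_smult wf_Lw op_mult_smult_right)
  also have "\<dots> = op_smult ?\<rho> (op_mult N (op_mult N (RP m j) (Lw (Suc m) j)) (Rg (Suc j) (Suc m)))"
    by (simp add: c op_mult_assoc)
  also have "\<dots> = op_smult ?\<rho> (op_smult ?\<rho>j (op_mult N (RP (Suc m) j) (Rg (Suc j) (Suc m))))"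
    using Suc.IH h by (simp add: op_mult_smult_left)
  also have "\<dots> = op_smult (?\<rho>j * ?\<rho>) (RP (Suc m) (Suc j))"
    using h by (simp add: RP_snoc op_smult_smult mult.commute)
  finally show ?case by (simp add: prod.nat_ivl_Suc')
qed

lemma lemG1:
  assumes m: "m < N" and G: "Gp m = op_smult (KK m) (op_mult N (SX m) (RP m m))"
  shows "op_mult N (Gp m) (op_smult (cq q) (op_mult N (op_mult N (Lw (Suc m) m) (loc N (Suc m) Q)) (Rg (Suc m) (Suc m))))
       = op_smult (KK (Suc m)) (op_mult N (op_mult N (SX m) (loc N (Suc m) Q)) (RP (Suc m) (Suc m)))"
proof -
  let ?\<rho>s = "\<Prod>b=1..m. rho q (eta b / eta (Suc m))"
  have c: "op_mult N (RP (Suc m) m) (loc N (Suc m) Q) = op_mult N (loc N (Suc m) Q) (RP (Suc m) m)"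
    by (rule alg_comm[OF alg_loc RP_alg]) (use m in auto)
  have "op_mult N (Gp m) (op_smult (cq q) (op_mult N (op_mult N (Lw (Suc m) m) (loc N (Suc m) Q)) (Rg (Suc m) (Suc m))))
      = op_smult (KK m * cq q) (op_mult N (SX m) (op_mult N (op_mult N (RP m m) (Lw (Suc m) m)) (op_mult N (loc N (Suc m) Q) (Rg (Suc m) (Suc m)))))"
    by (simp add: G op_mult_smult_both op_mult_assoc)
  also have "\<dots> = op_smult (KK m * cq q * ?\<rho>s) (op_mult N (SX m) (op_mult N (op_mult N (RP (Suc m) m) (loc N (Suc m) Q)) (Rg (Suc m) (Suc m))))"
    using m by (simp add: lemI op_mult_smult_left op_mult_smult_right op_smult_smult op_mult_assoc mult.assoc)
  also have "\<dots> = op_smult (KK (Suc m)) (op_mult N (op_mult N (SX m) (loc N (Suc m) Q)) (RP (Suc m) (Suc m)))"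
    using m by (simp add: c KK_Suc RP_snoc op_mult_assoc)
  finally show ?thesis .
qed

lemma lemG0: "m \<le> N \<Longrightarrow> Gp m = op_smult (KK m) (op_mult N (SX m) (RP m m))"
proof (induction m)
  case 0
  then show ?case by (simp add: Gp_def SX_def RP_def op_prod_def KK_def op_id_left)
next
  case (Suc m)
  then have m: "m < N" by simp
  have "Gp (Suc m) = op_mult N (Gp m) (op_smult (cq q) (op_mult N (op_mult N (Lw (Suc m) m) (loc N (Suc m) sigx)) (Rg (Suc m) (Suc m))))"
    using m by (simp add: Gp_snoc T_form)
  also have "\<dots> = op_smult (KK (Suc m)) (op_mult N (op_mult N (SX m) (loc N (Suc m) sigx)) (RP (Suc m) (Suc m)))"
    by (rule lemG1[OF m Suc.IH]) (use m in simp)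
  finally show ?case using m by (simp add: SX_snoc)
qed

lemma lemC:
  assumes n: "1 \<le> n" "n \<le> N"
  shows "op_mult N (Gp (n - 1)) (ptrace (aux_mult N (M (eta n)) (aux_scalar N (m2 X sigx)))) = op_mult N (loc N n X) (Gp n)"
proof -
  obtain m where nm: "n = Suc m" using n by (cases n) auto
  have m: "m < N" using n nm by simp
  have c: "op_mult N (SX m) (loc N (Suc m) X) = op_mult N (loc N (Suc m) X) (SX m)"
    by (rule alg_comm[OF alg_loc SX_alg]) (use m in auto)
  have c': "op_mult N (SX m) (op_mult N (loc N (Suc m) X) Z) = op_mult N (loc N (Suc m) X) (op_mult N (SX m) Z)" for Z
    by (metis c op_mult_assoc)
  have "op_mult N (Gp m) (ptrace (aux_mult N (M (eta (Suc m))) (aux_scalar N (m2 X sigx))))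
     = op_smult (KK (Suc m)) (op_mult N (op_mult N (SX m) (loc N (Suc m) (m2 X sigx))) (RP (Suc m) (Suc m)))"
    using Y_form[of "Suc m" "m2 X sigx"] m lemG1[OF m lemG0[of m]] by simp
  also have "\<dots> = op_mult N (loc N (Suc m) X) (Gp (Suc m))"
    using m by (simp add: lemG0 SX_snoc loc_mult_same[symmetric] op_mult_smult_right c' op_mult_assoc)
  finally show ?thesis using nm by simp
qed

end


lemma comm_prod:
  assumes "\<And>y. y \<in> set xs \<Longrightarrow> op_mult N x y = op_mult N y x" "\<And>y. y \<in> set xs \<Longrightarrow> wf N y" "wf N x"
  shows "op_mult N x (op_prod N xs) = op_mult N (op_prod N xs) x"
  using assms
proof (induction xs)
  case Nil then show ?case by (simp add: op_prod_def op_id_left op_id_right)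
next
  case (Cons y ys)
  have "op_mult N x (op_mult N y (op_prod N ys)) = op_mult N y (op_mult N x (op_prod N ys))"
    using Cons.prems by (metis list.set_intros(1) op_mult_assoc)
  also have "\<dots> = op_mult N (op_mult N y (op_prod N ys)) x"
    using Cons by (simp add: op_mult_assoc)
  finally show ?case by (simp add: op_prod_def)
qed

lemma prod_rev:
  assumes "\<And>x y. x \<in> set xs \<Longrightarrow> y \<in> set xs \<Longrightarrow> op_mult N x y = op_mult N y x" "\<And>x. x \<in> set xs \<Longrightarrow> wf N x"
  shows "op_prod N (rev xs) = op_prod N xs"
  using assms
proof (induction xs)
  case Nil then show ?case by simp
next
  case (Cons x xs)
  have "op_prod N (rev xs @ [x]) = op_mult N (op_prod N (rev xs)) x"
    by (rule op_prod_snoc) (use Cons.prems in auto)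
  then have "op_prod N (rev (x # xs)) = op_mult N (op_prod N (rev xs)) x" by simp
  also have "\<dots> = op_mult N (op_prod N xs) x" using Cons by simp
  also have "\<dots> = op_mult N x (op_prod N xs)"
    by (rule comm_prod[symmetric]) (use Cons.prems in auto)
  finally show ?case by (simp add: op_prod_def)
qed

lemma telescope:
  assumes "\<And>b. b \<in> {1..n} \<Longrightarrow> op_mult N (f b) (g b) = op_id N" "\<And>b. b \<in> {1..n} \<Longrightarrow> wf N (f b)" "\<And>b. b \<in> {1..n} \<Longrightarrow> wf N (g b)"
  shows "op_mult N (op_prod N (rev (map f [1..<Suc n]))) (op_prod N (map g [1..<Suc n])) = op_id N"
  using assms
proof (induction n)
  case 0 then show ?case by (simp add: op_prod_def op_id_left)
next
  case (Suc n)
  have IH: "op_mult N (op_prod N (rev (map f [1..<Suc n]))) (op_prod N (map g [1..<Suc n])) = op_id N"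
    using Suc by auto
  have "op_prod N (map g [1..<Suc (Suc n)]) = op_mult N (op_prod N (map g [1..<Suc n])) (g (Suc n))"
    unfolding upt_Suc_snoc by (simp only: map_append list.map) (rule op_prod_snoc, use Suc.prems in auto)
  moreover have "op_prod N (rev (map f [1..<Suc (Suc n)])) = op_mult N (f (Suc n)) (op_prod N (rev (map f [1..<Suc n])))"
    unfolding upt_Suc_snoc by (simp add: op_prod_def del: upt_Suc)
  ultimately have "op_mult N (op_prod N (rev (map f [1..<Suc (Suc n)]))) (op_prod N (map g [1..<Suc (Suc n)]))
     = op_mult N (f (Suc n)) (op_mult N (op_mult N (op_prod N (rev (map f [1..<Suc n]))) (op_prod N (map g [1..<Suc n]))) (g (Suc n)))"
    by (simp only: op_mult_assoc)
  also have "\<dots> = op_mult N (f (Suc n)) (g (Suc n))"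
  proof -
    have wg: "wf N (g (Suc n))" using Suc.prems(3) by auto
    show ?thesis by (simp only: IH op_id_left[OF wg])
  qed
  also have "\<dots> = op_id N" using Suc.prems by auto
  finally show ?case .
qed

context setting
begin

abbreviation "\<alpha> b \<equiv> afun N q eta (eta b) * dfun N eta (eta b / q)"
definition Tp :: "nat \<Rightarrow> cop" where "Tp b = op_smult (inverse (\<alpha> b)) (T (eta b / q))"

lemma T_Tp: "b \<in> {1..N} \<Longrightarrow> \<alpha> b \<noteq> 0 \<Longrightarrow> op_mult N (T (eta b)) (Tp b) = op_id N"
proof -
  assume b: "b \<in> {1..N}" and a: "\<alpha> b \<noteq> 0"
  have i: "inverse (\<alpha> b) * \<alpha> b = 1" using a by (rule left_inverse)
  have "op_mult N (T (eta b)) (Tp b) = op_smult (inverse (\<alpha> b)) (op_mult N (T (eta b)) (T (eta b / q)))"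
    by (simp only: Tp_def op_mult_smult_right)
  also have "\<dots> = op_smult (inverse (\<alpha> b) * \<alpha> b) (op_id N)"
  proof -
    have "op_mult N (T (eta b)) (T (eta b / q)) = op_smult (\<alpha> b) (op_id N)" using TT b by auto
    then show ?thesis by (simp only: op_smult_smult)
  qed
  finally show ?thesis by (simp only: i op_smult_one)
qed

lemma wf_Tp: "wf N (Tp b)" by (simp add: Tp_def wf_T)

lemma Gp_inv:
  assumes H: "\<forall>b\<in>{1..N}. \<alpha> b \<noteq> 0" and n: "n \<le> N"
  shows "op_mult N (Gp n) (op_prod N (map Tp [1..<Suc n])) = op_id N"
proof -
  have "Gp n = op_prod N (rev (map (\<lambda>b. T (eta b)) [1..<Suc n]))"
    unfolding Gp_def using n H by (intro prod_rev[symmetric]) (auto intro: T_comm wf_T)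
  moreover have "op_mult N (op_prod N (rev (map (\<lambda>b. T (eta b)) [1..<Suc n]))) (op_prod N (map Tp [1..<Suc n])) = op_id N"
    by (rule telescope) (use n H in \<open>auto intro!: T_Tp wf_T wf_Tp simp del: mult_eq_0_iff\<close>)
  ultimately show ?thesis by simp
qed

lemma formula1:
  assumes H: "\<forall>b\<in>{1..N}. \<alpha> b \<noteq> 0" and n: "1 \<le> n" "n \<le> N"
  shows "loc N n X = op_mult N (Gp (n - 1)) (op_mult N (ptrace (aux_mult N (aux_mult N (M (eta n)) (aux_scalar N X)) (aux_scalar N sigx)))
      (op_prod N (map Tp [1..<Suc n])))"
proof -
  have "loc N n X = op_mult N (loc N n X) (op_mult N (Gp n) (op_prod N (map Tp [1..<Suc n])))"
    using Gp_inv[OF H n(2)] by (simp add: op_id_right)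
  also have "\<dots> = op_mult N (op_mult N (loc N n X) (Gp n)) (op_prod N (map Tp [1..<Suc n]))"
    by (simp only: op_mult_assoc)
  also have "\<dots> = op_mult N (op_mult N (Gp (n - 1)) (ptrace (aux_mult N (M (eta n)) (aux_scalar N (m2 X sigx))))) (op_prod N (map Tp [1..<Suc n]))"
    by (simp only: lemC[OF n])
  finally show ?thesis by (simp only: op_mult_assoc Y_eq)
qed

lemma formula2:
  assumes H: "\<forall>b\<in>{1..N}. \<alpha> b \<noteq> 0" and n: "1 \<le> n" "n \<le> N"
  shows "loc N n X = op_mult N (Gp n) (op_mult N (op_smult (inverse (- \<alpha> n))
     (ptrace (aux_mult N (aux_mult N (aux_mult N (aux_mult N (aux_scalar N sigz) (ptransp (M (eta n / q)))) (aux_scalar N sigz)) (aux_scalar N X)) (aux_scalar N sigx))))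
     (op_prod N (map Tp [1..<n])))"
proof -
  obtain m where nm: "n = Suc m" using n by (cases n) auto
  have m: "m < N" using n nm by simp
  have an: "\<alpha> n \<noteq> 0" using H n by auto
  let ?Y = "ptrace (aux_mult N (M (eta n)) (aux_scalar N (m2 X sigx)))"
  let ?Z = "ptrace (aux_mult N (M (eta n / q)) (aux_scalar N (Vz X)))"
  have Zeq: "ptrace (aux_mult N (aux_mult N (aux_mult N (aux_mult N (aux_scalar N sigz) (ptransp (M (eta n / q)))) (aux_scalar N sigz)) (aux_scalar N X)) (aux_scalar N sigx)) = ?Z"
    using transp_trace[OF awf_M] by (simp add: Vz_def)
  have wG: "wf N (Gp m)" unfolding Gp_def by (rule wf_op_prod) (auto intro: wf_T)
  have wL: "wf N (loc N n X)" by simp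
  have "op_mult N (loc N n X) (Gp m) = op_mult N (loc N n X) (op_mult N (Gp m) (op_mult N (T (eta n)) (Tp n)))"
    using T_Tp[OF _ an] n wG by (simp add: op_id_right)
  also have "\<dots> = op_mult N (op_mult N (loc N n X) (Gp n)) (Tp n)"
    using nm by (simp add: Gp_snoc op_mult_assoc)
  also have "\<dots> = op_mult N (op_mult N (Gp m) ?Y) (Tp n)"
    using lemC[OF n, of X] nm by simp
  also have "\<dots> = op_mult N (Gp m) (op_smult (inverse (\<alpha> n)) (op_mult N ?Y (T (eta n / q))))"
    by (simp add: Tp_def op_mult_assoc op_mult_smult_right)
  also have "\<dots> = op_mult N (Gp m) (op_smult (inverse (\<alpha> n)) (- op_mult N (T (eta n)) ?Z))"
    using lemmaQ[OF n, of X] by simp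
  also have "\<dots> = op_mult N (Gp n) (op_smult (inverse (- \<alpha> n)) ?Z)"
    using nm by (simp add: Gp_snoc op_mult_assoc op_mult_smult_right op_smult_uminus op_smult_minus_scalar[symmetric])
  finally have key: "op_mult N (loc N n X) (Gp m) = op_mult N (Gp n) (op_smult (inverse (- \<alpha> n)) ?Z)" .
  have "loc N n X = op_mult N (loc N n X) (op_mult N (Gp m) (op_prod N (map Tp [1..<Suc m])))"
    using Gp_inv[OF H] m by (simp add: op_id_right)
  also have "\<dots> = op_mult N (op_mult N (loc N n X) (Gp m)) (op_prod N (map Tp [1..<Suc m]))"
    by (simp only: op_mult_assoc)
  also have "\<dots> = op_mult N (op_mult N (Gp n) (op_smult (inverse (- \<alpha> n)) ?Z)) (op_prod N (map Tp [1..<Suc m]))"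
    by (simp only: key)
  finally show ?thesis using nm Zeq by (simp only: op_mult_assoc)
qed

end


lemma qdetbar_neg: "qdetbar N q eta l = - qdet N q eta l"
  by (simp add: qdetbar_def qdet_def op_diff_eq)

context setting
begin

lemma qdet_eta:
  assumes b: "b \<in> {1..N}"
  shows "qdet N q eta (eta b) = op_smult (- \<alpha> b) (op_id N)"
proof -
  have e: "eta b \<noteq> 0" using eta b by auto
  show ?thesis using qdet_formula[OF q e eta] ad_prod[OF q e eta] by simp
qed

lemma qdetbar_eta:
  assumes b: "b \<in> {1..N}"
  shows "qdetbar N q eta (eta b) = op_smult (\<alpha> b) (op_id N)"
  using qdet_eta[OF b] by (simp add: qdetbar_neg op_smult_minus_scalar)

lemma Tp_fun: "Tp = (\<lambda>b. op_smult (inverse (afun N q eta (eta b) * dfun N eta (eta b / q))) (Tbar N q eta (eta b / q)))"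
  by (simp add: fun_eq_iff Tp_def)

end

theorem mainTheorem9:
  fixes N :: nat and q :: complex and eta :: "nat \<Rightarrow> complex"
  assumes "N \<ge> 1" and "q \<noteq> 0" and "q \<noteq> 1" and "q \<noteq> -1"
    and "\<forall>b\<in>{1..N}. eta b \<noteq> 0"
    and "\<forall>b\<in>{1..N}. afun N q eta (eta b) * dfun N eta (eta b / q) \<noteq> 0"
  shows "(\<forall>b\<in>{1..N}.
            op_mult N (Tbar N q eta (eta b)) (Tbar N q eta (eta b / q)) = qdetbar N q eta (eta b)
          \<and> qdetbar N q eta (eta b)
              = op_smult (afun N q eta (eta b) * dfun N eta (eta b / q)) (op_id N))
       \<and> (\<forall>n\<in>{1..N}.
            qdet N q eta (eta n) = op_smult (- (afun N q eta (eta n) * dfun N eta (eta n / q))) (op_id N)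
          \<and> (\<forall>X :: nat \<Rightarrow> nat \<Rightarrow> complex.
               loc N n X
                 = op_mult N
                     (op_prod N (map (\<lambda>b. Tbar N q eta (eta b)) [1..<n]))
                     (op_mult N
                        (ptrace (aux_mult N (aux_mult N (monodromy N q eta (eta n)) (aux_scalar N X))
                                            (aux_scalar N sigx)))
                        (op_prod N (map (\<lambda>b. op_smult (inverse (afun N q eta (eta b) * dfun N eta (eta b / q)))
                                                       (Tbar N q eta (eta b / q))) [1..<Suc n])))
             \<and> loc N n X
                 = op_mult N
                     (op_prod N (map (\<lambda>b. Tbar N q eta (eta b)) [1..<Suc n]))
                     (op_mult N
                        (op_smult (inverse (- (afun N q eta (eta n) * dfun N eta (eta n / q))))
                          (ptrace (aux_mult N (aux_mult N (aux_mult N (aux_mult N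
                                     (aux_scalar N sigz) (ptransp (monodromy N q eta (eta n / q))))
                                     (aux_scalar N sigz)) (aux_scalar N X)) (aux_scalar N sigx))))
                        (op_prod N (map (\<lambda>b. op_smult (inverse (afun N q eta (eta b) * dfun N eta (eta b / q)))
                                                       (Tbar N q eta (eta b / q))) [1..<n])))))"
proof -
  interpret S: setting N q eta using assms(2,5) by unfold_locales auto
  have H: "\<forall>b\<in>{1..N}. afun N q eta (eta b) * dfun N eta (eta b / q) \<noteq> 0" by (rule assms(6))
  show ?thesis
  proof (intro conjI ballI allI)
    fix b assume b: "b \<in> {1..N}"
    show "op_mult N (Tbar N q eta (eta b)) (Tbar N q eta (eta b / q)) = qdetbar N q eta (eta b)"
      using S.TT[of b] S.qdetbar_eta[OF b] b by simp
    show "qdetbar N q eta (eta b) = op_smult (afun N q eta (eta b) * dfun N eta (eta b / q)) (op_id N)"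
      by (rule S.qdetbar_eta[OF b])
  next
    fix n assume n: "n \<in> {1..N}"
    show "qdet N q eta (eta n) = op_smult (- (afun N q eta (eta n) * dfun N eta (eta n / q))) (op_id N)"
      by (rule S.qdet_eta[OF n])
  next
    fix n X assume n: "n \<in> {1..N}"
    have n1: "1 \<le> n" "n \<le> N" using n by auto
    have u: "[1..<Suc (n - 1)] = [1..<n]" using n1 by simp
    show "loc N n X
                 = op_mult N
                     (op_prod N (map (\<lambda>b. Tbar N q eta (eta b)) [1..<n]))
                     (op_mult N
                        (ptrace (aux_mult N (aux_mult N (monodromy N q eta (eta n)) (aux_scalar N X))
                                            (aux_scalar N sigx)))
                        (op_prod N (map (\<lambda>b. op_smult (inverse (afun N q eta (eta b) * dfun N eta (eta b / q)))
                                                       (Tbar N q eta (eta b / q))) [1..<Suc n])))"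
      using S.formula1[OF H n1, of X] unfolding S.Gp_def S.Tp_fun u .
    show "loc N n X
                 = op_mult N
                     (op_prod N (map (\<lambda>b. Tbar N q eta (eta b)) [1..<Suc n]))
                     (op_mult N
                        (op_smult (inverse (- (afun N q eta (eta n) * dfun N eta (eta n / q))))
                          (ptrace (aux_mult N (aux_mult N (aux_mult N (aux_mult N
                                     (aux_scalar N sigz) (ptransp (monodromy N q eta (eta n / q))))
                                     (aux_scalar N sigz)) (aux_scalar N X)) (aux_scalar N sigx))))
                        (op_prod N (map (\<lambda>b. op_smult (inverse (afun N q eta (eta b) * dfun N eta (eta b / q)))
                                                       (Tbar N q eta (eta b / q))) [1..<n])))"
      using S.formula2[OF H n1, of X] unfolding S.Gp_def S.Tp_fun .
  qed
qed


end
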